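(* For every $n\in\mathbb{N}$ and every integer $d$ with $1\le d\le\sqrt n/3$, there exist a connected planar graph $G_d$ on $n$ vertices, vertices $u,v$ with $d(u,v)=d$, and a deterministic root-choice rule such that for every integer $R>2d$, Algorithm KPR$_+$ run on $G_d$ with parameter $R$ and this root-choice rule separates $u$ and $v$ with probability at most $8\rho_{uv}^4$.
   Context: Let $G=(V,E)$ be a connected unweighted planar graph, $d(\cdot,\cdot)$ its shortest-path distance, and $\rho_{uv}=d(u,v)/R$. Two vertices are separated if they lie in different output clusters. Algorithm KPR$_+$ with integer parameter $R\ge 1$: set $F=\emptyset$. For each of four phases $i=1,2,3,4$: for each connected component $C$ of $(V,E\setminus F)$ (components as at the start of the phase), choose a root $r\in C$ (according to the root-choice rule, which specifies the root of each component encountered), let the level of $x\in C$ be its distance from $r$ within $C$, sample $k$ uniformly from $\{0,\dots,R-1\}$ independently, and add to $F$ every edge of $C$ joining a vertex at level $\ell$ to a vertex at level $\ell+1$ with $\ell\equiv k\pmod R$. Output the connected components of $(V,E\setminus F)$. *)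

theory Defs
  imports "HOL-Probability.Probability"
begin

definition graph :: "'a set \<Rightarrow> 'a set set \<Rightarrow> bool" where
  "graph V E \<longleftrightarrow> finite V \<and> (\<forall>e\<in>E. \<exists>x y. x \<noteq> y \<and> x \<in> V \<and> y \<in> V \<and> e = {x, y})"

definition walk :: "'a set set \<Rightarrow> 'a list \<Rightarrow> bool" where
  "walk E p \<longleftrightarrow> p \<noteq> [] \<and> (\<forall>i. Suc i < length p \<longrightarrow> {p ! i, p ! Suc i} \<in> E)"

definition gconn :: "'a set set \<Rightarrow> 'a \<Rightarrow> 'a \<Rightarrow> bool" where
  "gconn E x y \<longleftrightarrow> (\<exists>p. walk E p \<and> hd p = x \<and> last p = y)"

definition gdist :: "'a set set \<Rightarrow> 'a \<Rightarrow> 'a \<Rightarrow> nat" where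
  "gdist E x y = (LEAST k. \<exists>p. walk E p \<and> hd p = x \<and> last p = y \<and> length p = Suc k)"

definition connected_graph :: "'a set \<Rightarrow> 'a set set \<Rightarrow> bool" where
  "connected_graph V E \<longleftrightarrow> V \<noteq> {} \<and> (\<forall>x\<in>V. \<forall>y\<in>V. gconn E x y)"

definition components :: "'a set \<Rightarrow> 'a set set \<Rightarrow> 'a set set" where
  "components V E' = (\<lambda>x. {y \<in> V. gconn E' x y}) ` V"

definition planar_drawing ::
  "'a set \<Rightarrow> 'a set set \<Rightarrow> ('a \<Rightarrow> complex) \<Rightarrow> ('a set \<Rightarrow> real \<Rightarrow> complex) \<Rightarrow> bool" where
  "planar_drawing V E f \<gamma> \<longleftrightarrow>
     inj_on f V \<and>
     (\<forall>e\<in>E. arc (\<gamma> e) \<and>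
        (\<exists>x y. e = {x, y} \<and> pathstart (\<gamma> e) = f x \<and> pathfinish (\<gamma> e) = f y) \<and>
        path_image (\<gamma> e) \<inter> f ` V = f ` e) \<and>
     (\<forall>e\<in>E. \<forall>e'\<in>E. e \<noteq> e' \<longrightarrow> path_image (\<gamma> e) \<inter> path_image (\<gamma> e') \<subseteq> f ` (e \<inter> e'))"

definition planar :: "'a set \<Rightarrow> 'a set set \<Rightarrow> bool" where
  "planar V E \<longleftrightarrow> (\<exists>f \<gamma>. planar_drawing V E f \<gamma>)"

text \<open>A rt-choice rule gets the phase number i (1..4), the current set F of
  removed edges and a component C of (V, E - F), and returns the root of C.\<close>

type_synonym 'a root_rule = "nat \<Rightarrow> 'a set set \<Rightarrow> 'a set \<Rightarrow> 'a"

definition valid_root_rule :: "'a set \<Rightarrow> 'a set set \<Rightarrow> 'a root_rule \<Rightarrow> bool" where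
  "valid_root_rule V E rt \<longleftrightarrow>
     (\<forall>i F C. F \<subseteq> E \<longrightarrow> C \<in> components V (E - F) \<longrightarrow> rt i F C \<in> C)"

definition cut_edges :: "'a set set \<Rightarrow> 'a set \<Rightarrow> 'a \<Rightarrow> nat \<Rightarrow> nat \<Rightarrow> 'a set set" where
  "cut_edges E' C r R k =
     {e \<in> E'. e \<subseteq> C \<and> (\<exists>x y. e = {x, y} \<and> gdist E' r y = Suc (gdist E' r x)
                                 \<and> gdist E' r x mod R = k mod R)}"

definition kpr_phase ::
  "'a set \<Rightarrow> 'a set set \<Rightarrow> nat \<Rightarrow> 'a root_rule \<Rightarrow> nat \<Rightarrow> 'a set set \<Rightarrow> 'a set set pmf" where
  "kpr_phase V E R rt i F =
     map_pmf (\<lambda>k. F \<union> (\<Union>C\<in>components V (E - F). cut_edges (E - F) C (rt i F C) R (k C)))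
             (Pi_pmf (components V (E - F)) 0 (\<lambda>_. pmf_of_set {0..<R}))"

fun kpr_iter :: "'a set \<Rightarrow> 'a set set \<Rightarrow> nat \<Rightarrow> 'a root_rule \<Rightarrow> nat \<Rightarrow> 'a set set pmf" where
  "kpr_iter V E R rt 0 = return_pmf {}"
| "kpr_iter V E R rt (Suc i) = bind_pmf (kpr_iter V E R rt i) (kpr_phase V E R rt (Suc i))"

definition kpr_sep_prob ::
  "'a set \<Rightarrow> 'a set set \<Rightarrow> nat \<Rightarrow> 'a root_rule \<Rightarrow> 'a \<Rightarrow> 'a \<Rightarrow> real" where
  "kpr_sep_prob V E R rt u v =
     measure_pmf.prob (kpr_iter V E R rt 4) {F. \<not> gconn (E - F) u v}"

end

theory Submission imports Defs "HOL-Library.Countable" begin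

definition adj :: "'a set set \<Rightarrow> 'a \<Rightarrow> 'a \<Rightarrow> bool" where
  "adj E x y \<longleftrightarrow> {x,y} \<in> E"

lemma adj_sym: "adj E x y \<Longrightarrow> adj E y x"
  by (simp add: adj_def insert_commute)

lemma adj_mono: "adj E x y \<Longrightarrow> E \<subseteq> E' \<Longrightarrow> adj E' x y"
  by (auto simp: adj_def)

lemma walk_Cons: "walk E (x # p) \<longleftrightarrow> (p = [] \<or> (walk E p \<and> {x, hd p} \<in> E))"
proof
  assume w: "walk E (x # p)"
  show "p = [] \<or> (walk E p \<and> {x, hd p} \<in> E)"
  proof (cases p)
    case Nil then show ?thesis by simp
  next
    case (Cons y q)
    have 1: "{x, hd p} \<in> E" using w Cons unfolding walk_def by (auto dest: spec[of _ 0])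
    have "walk E p" unfolding walk_def
    proof (intro conjI allI impI)
      show "p \<noteq> []" using Cons by simp
      fix i assume "Suc i < length p"
      then have "Suc (Suc i) < length (x # p)" by simp
      then show "{p ! i, p ! Suc i} \<in> E" using w unfolding walk_def by (auto dest: spec[of _ "Suc i"])
    qed
    with 1 show ?thesis by simp
  qed
next
  assume h: "p = [] \<or> (walk E p \<and> {x, hd p} \<in> E)"
  show "walk E (x # p)"
  proof (cases p)
    case Nil then show ?thesis by (simp add: walk_def)
  next
    case (Cons y q)
    with h have wp: "walk E p" and e: "{x, y} \<in> E" by auto
    show ?thesis unfolding walk_def
    proof (intro conjI allI impI)
      fix i assume i: "Suc i < length (x # p)"
      show "{(x # p) ! i, (x # p) ! Suc i} \<in> E"
      proof (cases i)
        case 0 then show ?thesis using e Cons by simp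
      next
        case (Suc i')
        then show ?thesis using wp i unfolding walk_def by simp
      qed
    qed simp
  qed
qed

lemma walk_relpow:
  "(\<exists>p. walk E p \<and> hd p = x \<and> last p = y \<and> length p = Suc k) \<longleftrightarrow> (adj E ^^ k) x y"
proof (induction k arbitrary: x)
  case 0
  show ?case
  proof
    assume "\<exists>p. walk E p \<and> hd p = x \<and> last p = y \<and> length p = Suc 0"
    then obtain p where "hd p = x" "last p = y" "length p = 1" by auto
    then show "(adj E ^^ 0) x y" by (cases p) auto
  next
    assume "(adj E ^^ 0) x y"
    then show "\<exists>p. walk E p \<and> hd p = x \<and> last p = y \<and> length p = Suc 0"
      by (intro exI[of _ "[x]"]) (auto simp: walk_def)
  qed
next
  case (Suc k)
  show ?case
  proof
    assume "\<exists>p. walk E p \<and> hd p = x \<and> last p = y \<and> length p = Suc (Suc k)"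
    then obtain p where p: "walk E p" "hd p = x" "last p = y" "length p = Suc (Suc k)" by auto
    then obtain q where q: "p = x # q" by (cases p) auto
    with p have qne: "q \<noteq> []" by auto
    with p q have "walk E q" "{x, hd q} \<in> E" by (auto simp: walk_Cons)
    moreover have "last q = y" "length q = Suc k" using p q qne by auto
    ultimately have "(adj E ^^ k) (hd q) y" "adj E x (hd q)" using Suc.IH[of "hd q"] unfolding adj_def[symmetric] by blast+
    then show "(adj E ^^ Suc k) x y" by (meson relpowp_Suc_I2)
  next
    assume "(adj E ^^ Suc k) x y"
    then obtain z where z: "adj E x z" "(adj E ^^ k) z y" by (meson relpowp_Suc_D2)
    from Suc.IH[of z] z obtain q where q: "walk E q" "hd q = z" "last q = y" "length q = Suc k" by auto
    then have "q \<noteq> []" by auto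
    then have "walk E (x # q)" using q z by (auto simp: walk_Cons adj_def)
    then show "\<exists>p. walk E p \<and> hd p = x \<and> last p = y \<and> length p = Suc (Suc k)"
      using q \<open>q \<noteq> []\<close> by (intro exI[of _ "x # q"]) auto
  qed
qed

lemma gdist_alt: "gdist E x y = (LEAST k. (adj E ^^ k) x y)"
  unfolding gdist_def walk_relpow ..

lemma gconn_alt: "gconn E x y \<longleftrightarrow> (\<exists>k. (adj E ^^ k) x y)"
proof
  assume "gconn E x y"
  then obtain p where p: "walk E p" "hd p = x" "last p = y" unfolding gconn_def by auto
  then have "length p = Suc (length p - 1)" by (auto simp: walk_def)
  then show "\<exists>k. (adj E ^^ k) x y" using p walk_relpow[of E x y "length p - 1"] by blast
next
  assume "\<exists>k. (adj E ^^ k) x y"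
  then obtain k where "(adj E ^^ k) x y" by blast
  then show "gconn E x y" unfolding gconn_def using walk_relpow[of E x y k] by blast
qed

lemma gconn_rtranclp: "gconn E x y \<longleftrightarrow> (adj E)\<^sup>*\<^sup>* x y"
  by (simp add: gconn_alt rtranclp_power)

lemma gconn_refl: "gconn E x x" by (simp add: gconn_rtranclp)

lemma adj_gconn: "adj E x y \<Longrightarrow> gconn E x y" by (simp add: gconn_rtranclp)

lemma gconn_trans: "gconn E x y \<Longrightarrow> gconn E y z \<Longrightarrow> gconn E x z"
  by (simp add: gconn_rtranclp)

lemma relpowp_adj_sym: "(adj E ^^ k) x y \<Longrightarrow> (adj E ^^ k) y x"
proof (induction k arbitrary: x)
  case 0 then show ?case by simp
next
  case (Suc k)
  then obtain z where "adj E x z" "(adj E ^^ k) z y" by (meson relpowp_Suc_D2)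
  with Suc.IH have "(adj E ^^ k) y z" by auto
  then show ?case using adj_sym \<open>adj E x z\<close> by (meson relpowp_Suc_I)
qed

lemma gconn_sym: "gconn E x y \<Longrightarrow> gconn E y x"
  unfolding gconn_alt by (meson relpowp_adj_sym)

lemma relpowp_adj_trans: "(adj E ^^ a) x y \<Longrightarrow> (adj E ^^ b) y z \<Longrightarrow> (adj E ^^ (a + b)) x z"
  unfolding relpowp_add by blast

lemma relpowp_adj_mono: "(adj E ^^ k) x y \<Longrightarrow> E \<subseteq> E' \<Longrightarrow> (adj E' ^^ k) x y"
proof (induction k arbitrary: y)
  case 0 then show ?case by simp
next
  case (Suc k)
  from Suc.prems(1) obtain z where z: "(adj E ^^ k) x z" "adj E z y" by (rule relpowp_Suc_E)
  have "(adj E' ^^ k) x z" by (rule Suc.IH[OF z(1) Suc.prems(2)])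
  moreover have "adj E' z y" by (rule adj_mono[OF z(2) Suc.prems(2)])
  ultimately show ?case by (rule relpowp_Suc_I)
qed

lemma gdist_le: "(adj E ^^ k) x y \<Longrightarrow> gdist E x y \<le> k"
  unfolding gdist_alt by (rule Least_le)

lemma gdist_attained: "gconn E x y \<Longrightarrow> (adj E ^^ gdist E x y) x y"
  unfolding gdist_alt gconn_alt by (rule LeastI_ex)

definition lip :: "'a set set \<Rightarrow> ('a \<Rightarrow> int) \<Rightarrow> bool" where
  "lip E \<phi> \<longleftrightarrow> (\<forall>a b. {a,b} \<in> E \<longrightarrow> \<phi> b \<le> \<phi> a + 1)"

lemma pot_bound: "lip E \<phi> \<Longrightarrow> E' \<subseteq> E \<Longrightarrow> (adj E' ^^ k) x y \<Longrightarrow> \<phi> y \<le> \<phi> x + int k"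
proof (induction k arbitrary: y)
  case 0 then show ?case by simp
next
  case (Suc k)
  from Suc.prems(3) obtain z where z: "(adj E' ^^ k) x z" "adj E' z y" by (rule relpowp_Suc_E)
  have "\<phi> z \<le> \<phi> x + int k" by (rule Suc.IH[OF Suc.prems(1,2) z(1)])
  moreover have "{z, y} \<in> E" using z(2) Suc.prems(2) unfolding adj_def by blast
  then have "\<phi> y \<le> \<phi> z + 1" using Suc.prems(1) unfolding lip_def by blast
  ultimately show ?case by simp
qed

lemma gdist_ge: "lip E \<phi> \<Longrightarrow> E' \<subseteq> E \<Longrightarrow> gconn E' x y \<Longrightarrow> \<phi> y - \<phi> x \<le> int (gdist E' x y)"
proof -
  assume a: "lip E \<phi>" "E' \<subseteq> E" "gconn E' x y"
  have "(adj E' ^^ gdist E' x y) x y" by (rule gdist_attained[OF a(3)])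
  from pot_bound[OF a(1,2) this] show ?thesis by simp
qed

lemma comp_in_components: "x \<in> V \<Longrightarrow> {y\<in>V. gconn E' x y} \<in> components V E'"
  by (auto simp: components_def)

lemma components_eq: "C \<in> components V E' \<Longrightarrow> z \<in> C \<Longrightarrow> C = {y\<in>V. gconn E' z y}"
proof -
  assume C: "C \<in> components V E'" and z: "z \<in> C"
  then obtain x where x: "x \<in> V" "C = {y\<in>V. gconn E' x y}" unfolding components_def by blast
  with z have xz: "gconn E' x z" by blast
  show ?thesis unfolding x(2)
  proof (intro Collect_cong conj_cong refl iffI)
    fix y assume "gconn E' x y" then show "gconn E' z y" using xz gconn_sym gconn_trans by metis
  next
    fix y assume "gconn E' z y" then show "gconn E' x y" using xz gconn_trans by metis
  qed
qed


lemma graph_edge_in_V: "graph V E \<Longrightarrow> e \<in> E \<Longrightarrow> x \<in> e \<Longrightarrow> x \<in> V"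
proof -
  assume G: "graph V E" and e: "e \<in> E" and x: "x \<in> e"
  from G e obtain a b where "a \<in> V" "b \<in> V" "e = {a, b}" unfolding graph_def by meson
  with x show "x \<in> V" by auto
qed

lemma survive:
  fixes kk :: "'a set \<Rightarrow> nat"
  assumes G: "graph V E" and uV: "u \<in> V"
    and XF: "X \<subseteq> E - F"
    and kkR: "\<forall>C \<in> components V (E - F). kk C < R"
    and ru: "gconn (E - F) u (rt i F {y\<in>V. gconn (E-F) u y})"
    and lev: "\<And>e x. e \<in> X \<Longrightarrow> x \<in> e \<Longrightarrow> gconn (E-F) (rt i F {y\<in>V. gconn (E-F) u y}) x
        \<and> lo \<le> gdist (E-F) (rt i F {y\<in>V. gconn (E-F) u y}) x
        \<and> gdist (E-F) (rt i F {y\<in>V. gconn (E-F) u y}) x \<le> hi"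
    and hiR: "hi \<le> R"
    and kout: "\<not> (lo \<le> kk {y\<in>V. gconn (E-F) u y} \<and> kk {y\<in>V. gconn (E-F) u y} < hi)"
  shows "X \<inter> (F \<union> (\<Union>C\<in>components V (E - F). cut_edges (E - F) C (rt i F C) R (kk C))) = {}"
proof (rule ccontr)
  define Cu where "Cu = {y\<in>V. gconn (E-F) u y}"
  define r where "r = rt i F Cu"
  assume "X \<inter> (F \<union> (\<Union>C\<in>components V (E - F). cut_edges (E - F) C (rt i F C) R (kk C))) \<noteq> {}"
  then obtain e where eX: "e \<in> X" and "e \<in> F \<union> (\<Union>C\<in>components V (E - F). cut_edges (E - F) C (rt i F C) R (kk C))"
    by blast
  moreover have "e \<notin> F" using eX XF by blast
  ultimately obtain C where C: "C \<in> components V (E - F)" and ec: "e \<in> cut_edges (E - F) C (rt i F C) R (kk C)"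
    by blast
  from ec obtain x y where eC: "e \<subseteq> C" and exy: "e = {x, y}"
    and lv: "gdist (E - F) (rt i F C) y = Suc (gdist (E - F) (rt i F C) x)"
    and md: "gdist (E - F) (rt i F C) x mod R = kk C mod R"
    unfolding cut_edges_def by blast
  have xe: "x \<in> e" and ye: "y \<in> e" using exy by auto
  have eE: "e \<in> E" using eX XF by blast
  have xV: "x \<in> V" using graph_edge_in_V[OF G eE xe] .
  have rx: "gconn (E-F) r x" using lev[OF eX xe] unfolding r_def Cu_def by blast
  have ux: "gconn (E-F) u x" using gconn_trans[OF ru[folded Cu_def r_def] rx] .
  have xCu: "x \<in> Cu" using ux xV unfolding Cu_def by blast
  have CuC: "Cu \<in> components V (E - F)" unfolding Cu_def by (rule comp_in_components[OF uV])
  have "x \<in> C" using eC xe by blast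
  then have "C = {y\<in>V. gconn (E-F) x y}" by (rule components_eq[OF C])
  moreover have "Cu = {y\<in>V. gconn (E-F) x y}" by (rule components_eq[OF CuC xCu])
  ultimately have CC: "C = Cu" by simp
  have l1: "lo \<le> gdist (E-F) r x" using lev[OF eX xe] unfolding r_def Cu_def by blast
  have l2: "gdist (E-F) r y \<le> hi" using lev[OF eX ye] unfolding r_def Cu_def by blast
  have lvr: "gdist (E-F) r y = Suc (gdist (E-F) r x)" using lv unfolding CC r_def .
  have xlt: "gdist (E-F) r x < R" using l2 lvr hiR by simp
  have kR: "kk Cu < R" using kkR CuC by blast
  have "gdist (E-F) r x = kk Cu" using md xlt kR unfolding CC r_def[symmetric] by simp
  then show False using kout l1 l2 lvr unfolding Cu_def[symmetric] by simp
qed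

lemma bind_prob_le:
  assumes "\<And>x. x \<in> set_pmf M \<Longrightarrow> measure_pmf.prob (N x) A \<le> c * indicator B x" and c: "c \<ge> 0"
  shows "measure_pmf.prob (bind_pmf M N) A \<le> c * measure_pmf.prob M B"
proof -
  have "emeasure (measure_pmf (bind_pmf M N)) A = (\<integral>\<^sup>+x. emeasure (measure_pmf (N x)) A \<partial>measure_pmf M)"
    by simp
  also have "\<dots> \<le> (\<integral>\<^sup>+x. ennreal c * indicator B x \<partial>measure_pmf M)"
  proof (intro nn_integral_mono_AE)
    show "AE x in measure_pmf M. emeasure (measure_pmf (N x)) A \<le> ennreal c * indicator B x"
    proof (rule AE_pmfI)
      fix x assume "x \<in> set_pmf M"
      from assms(1)[OF this] have h: "measure_pmf.prob (N x) A \<le> c * indicator B x" .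
      show "emeasure (measure_pmf (N x)) A \<le> ennreal c * indicator B x"
      proof (cases "x \<in> B")
        case True
        then show ?thesis using h by (simp add: measure_pmf.emeasure_eq_measure ennreal_leI)
      next
        case False
        then have "measure_pmf.prob (N x) A = 0" using h measure_nonneg[of "measure_pmf (N x)" A] by simp
        then show ?thesis using False by (simp add: measure_pmf.emeasure_eq_measure)
      qed
    qed
  qed
  also have "\<dots> = ennreal c * emeasure (measure_pmf M) B"
    by (simp add: nn_integral_cmult_indicator)
  also have "\<dots> = ennreal (c * measure_pmf.prob M B)"
    using c by (simp add: measure_pmf.emeasure_eq_measure ennreal_mult')
  finally have "ennreal (measure_pmf.prob (bind_pmf M N) A) \<le> ennreal (c * measure_pmf.prob M B)"
    by (simp add: measure_pmf.emeasure_eq_measure)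
  then show ?thesis using c by (simp add: ennreal_le_iff)
qed

lemma chain_bound:
  fixes it :: "nat \<Rightarrow> 'b pmf" and ph :: "nat \<Rightarrow> 'b \<Rightarrow> 'b pmf" and lv :: "'b \<Rightarrow> nat" and p :: "nat \<Rightarrow> real"
  assumes it0: "it 0 = return_pmf xinit" and itS: "\<And>t. it (Suc t) = bind_pmf (it t) (ph (Suc t))"
    and xinit: "xinit \<in> S" "lv xinit = m"
    and stepS: "\<And>i x y. x \<in> S \<Longrightarrow> 1 \<le> lv x \<Longrightarrow> y \<in> set_pmf (ph i x) \<Longrightarrow> y \<in> S \<and> lv x \<le> Suc (lv y)"
    and stepP: "\<And>i x. x \<in> S \<Longrightarrow> 1 \<le> lv x \<Longrightarrow> measure_pmf.prob (ph i x) {y. lv y < lv x} \<le> p (lv x)"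
    and p0: "\<And>j. p j \<ge> 0"
  shows "t \<le> m \<Longrightarrow> (\<forall>x\<in>set_pmf (it t). x \<in> S \<and> m \<le> lv x + t)
           \<and> measure_pmf.prob (it t) {x. lv x + t \<le> m} \<le> (\<Prod>j\<in>{m-t<..m}. p j)"
proof (induction t)
  case 0
  show ?case using xinit by (simp add: it0)
next
  case (Suc t)
  then have tm: "t < m" by simp
  from Suc.IH tm have IH1: "\<forall>x\<in>set_pmf (it t). x \<in> S \<and> m \<le> lv x + t"
    and IH2: "measure_pmf.prob (it t) {x. lv x + t \<le> m} \<le> (\<Prod>j\<in>{m-t<..m}. p j)" by auto
  have sup: "\<forall>y\<in>set_pmf (it (Suc t)). y \<in> S \<and> m \<le> lv y + Suc t"
  proof
    fix y assume "y \<in> set_pmf (it (Suc t))"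
    then obtain x where x: "x \<in> set_pmf (it t)" and y: "y \<in> set_pmf (ph (Suc t) x)"
      unfolding itS by auto
    from IH1 x have xS: "x \<in> S" and xl: "m \<le> lv x + t" by auto
    then have "1 \<le> lv x" using tm by simp
    from stepS[OF xS this y] xl show "y \<in> S \<and> m \<le> lv y + Suc t" by simp
  qed
  have "measure_pmf.prob (it (Suc t)) {y. lv y + Suc t \<le> m}
      \<le> p (m - t) * measure_pmf.prob (it t) {x. lv x + t \<le> m}"
    unfolding itS
  proof (rule bind_prob_le[OF _ p0])
    fix x assume x: "x \<in> set_pmf (it t)"
    from IH1 x have xS: "x \<in> S" and xl: "m \<le> lv x + t" by auto
    then have l1: "1 \<le> lv x" using tm by simp
    show "measure_pmf.prob (ph (Suc t) x) {y. lv y + Suc t \<le> m} \<le> p (m - t) * indicator {x. lv x + t \<le> m} x"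
    proof (cases "lv x + t \<le> m")
      case True
      then have lx: "lv x = m - t" using xl by simp
      have "measure_pmf.prob (ph (Suc t) x) {y. lv y + Suc t \<le> m} \<le> measure_pmf.prob (ph (Suc t) x) {y. lv y < lv x}"
        by (rule measure_pmf.finite_measure_mono) (use lx in auto)
      also have "\<dots> \<le> p (lv x)" by (rule stepP[OF xS l1])
      finally show ?thesis using True lx by simp
    next
      case False
      have "measure_pmf.prob (ph (Suc t) x) {y. lv y + Suc t \<le> m}
          = measure_pmf.prob (ph (Suc t) x) ({y. lv y + Suc t \<le> m} \<inter> set_pmf (ph (Suc t) x))"
        by (simp add: measure_Int_set_pmf)
      also have "{y. lv y + Suc t \<le> m} \<inter> set_pmf (ph (Suc t) x) = {}"
      proof (safe)
        fix y assume "y \<in> set_pmf (ph (Suc t) x)" "lv y + Suc t \<le> m"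
        with stepS[OF xS l1] False show "y \<in> {}" by force
      qed
      finally show ?thesis using False by simp
    qed
  qed
  also have "\<dots> \<le> p (m - t) * (\<Prod>j\<in>{m-t<..m}. p j)"
    by (rule mult_left_mono[OF IH2 p0])
  also have "\<dots> = (\<Prod>j\<in>{m - Suc t<..m}. p j)"
  proof -
    have "{m - Suc t<..m} = insert (m - t) {m-t<..m}" using tm by auto
    then show ?thesis by simp
  qed
  finally show ?case using sup by simp
qed


lemma phase_support:
  assumes fin: "finite (components V (E - F))" and R: "R > 0"
    and F': "F' \<in> set_pmf (kpr_phase V E R rt i F)"
  shows "\<exists>kk. (\<forall>C\<in>components V (E-F). kk C < R) \<and>
     F' = F \<union> (\<Union>C\<in>components V (E - F). cut_edges (E - F) C (rt i F C) R (kk C))"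
proof -
  have fin2: "finite {0..<R}" "{0..<R} \<noteq> {}" using R by auto
  from F' obtain kk where kk: "kk \<in> set_pmf (Pi_pmf (components V (E - F)) 0 (\<lambda>_. pmf_of_set {0..<R}))"
    and F'eq: "F' = F \<union> (\<Union>C\<in>components V (E - F). cut_edges (E - F) C (rt i F C) R (kk C))"
    unfolding kpr_phase_def by auto
  from kk have "\<forall>C\<in>components V (E-F). kk C < R"
    unfolding set_Pi_pmf[OF fin] PiE_dflt_def using set_pmf_of_set[OF fin2(2) fin2(1)] by auto
  with F'eq show ?thesis by blast
qed

lemma phase_prob:
  assumes fin: "finite (components V (E - F))" and R: "R > 0" and uV: "u \<in> V"
    and good: "\<And>kk. \<forall>C\<in>components V (E-F). kk C < R \<Longrightarrow> b \<le> kk {y\<in>V. gconn (E-F) u y} \<Longrightarrow>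
        P (F \<union> (\<Union>C\<in>components V (E - F). cut_edges (E - F) C (rt i F C) R (kk C)))"
  shows "measure_pmf.prob (kpr_phase V E R rt i F) {F'. \<not> P F'} \<le> real b / real R"
proof -
  define Cs where "Cs = components V (E - F)"
  define Q where "Q = Pi_pmf Cs 0 (\<lambda>_. pmf_of_set {0..<R})"
  define g where "g = (\<lambda>kk. F \<union> (\<Union>C\<in>Cs. cut_edges (E - F) C (rt i F C) R (kk C)))"
  define Cu where "Cu = {y\<in>V. gconn (E-F) u y}"
  have fin2: "finite {0..<R}" "{0..<R} \<noteq> {}" using R by auto
  have CuC: "Cu \<in> Cs" unfolding Cu_def Cs_def by (rule comp_in_components[OF uV])
  have ph: "kpr_phase V E R rt i F = map_pmf g Q" unfolding kpr_phase_def g_def Q_def Cs_def ..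
  have "measure_pmf.prob (kpr_phase V E R rt i F) {F'. \<not> P F'} = measure_pmf.prob Q (g -` {F'. \<not> P F'})"
    unfolding ph by simp
  also have "\<dots> = measure_pmf.prob Q (g -` {F'. \<not> P F'} \<inter> set_pmf Q)"
    by (simp add: measure_Int_set_pmf)
  also have "\<dots> \<le> measure_pmf.prob Q {kk. kk Cu < b}"
  proof (rule measure_pmf.finite_measure_mono)
    show "g -` {F'. \<not> P F'} \<inter> set_pmf Q \<subseteq> {kk. kk Cu < b}"
    proof
      fix kk assume a: "kk \<in> g -` {F'. \<not> P F'} \<inter> set_pmf Q"
      then have "\<forall>C\<in>components V (E-F). kk C < R"
        unfolding Q_def Cs_def set_Pi_pmf[OF fin] PiE_dflt_def using set_pmf_of_set[OF fin2(2) fin2(1)] by auto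
      with a good[of kk] show "kk \<in> {kk. kk Cu < b}" unfolding g_def Cu_def Cs_def by force
    qed
  qed simp
  also have "\<dots> = measure_pmf.prob (map_pmf (\<lambda>kk. kk Cu) Q) {..<b}" by (simp add: vimage_def)
  also have "map_pmf (\<lambda>kk. kk Cu) Q = pmf_of_set {0..<R}"
    unfolding Q_def using Pi_pmf_component[of Cs Cu 0 "\<lambda>_. pmf_of_set {0..<R}"] fin CuC
    unfolding Cs_def by simp
  also have "measure_pmf.prob (pmf_of_set {0..<R}) {..<b} = real (card ({0..<R} \<inter> {..<b})) / real (card {0..<R})"
    by (rule measure_pmf_of_set[OF fin2(2) fin2(1)])
  also have "\<dots> \<le> real b / real R"
  proof -
    have "card ({0..<R} \<inter> {..<b}) \<le> b"
      by (rule order_trans[OF card_mono[of "{..<b}"]]) auto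
    then show ?thesis using R by (simp add: divide_right_mono)
  qed
  finally show ?thesis .
qed


definition crosses :: "('a \<Rightarrow> real) \<Rightarrow> 'a set \<Rightarrow> 'a set \<Rightarrow> bool" where
  "crosses pos e e' \<longleftrightarrow> (\<exists>x y x' y'. e = {x,y} \<and> e' = {x',y'} \<and> pos x < pos x' \<and> pos x' < pos y \<and> pos y < pos y')"

definition arch :: "real \<Rightarrow> real \<Rightarrow> real \<Rightarrow> real \<Rightarrow> complex" where
  "arch l h s t = complex_of_real (l + t*(h-l)) + \<i> * complex_of_real (s * (t*(h-l)) * ((1-t)*(h-l)))"

lemma arch_Re [simp]: "Re (arch l h s t) = l + t*(h-l)" by (simp add: arch_def)
lemma arch_Im [simp]: "Im (arch l h s t) = s * (t*(h-l)) * ((1-t)*(h-l))" by (simp add: arch_def)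

lemma arch_arc: "l < h \<Longrightarrow> arc (arch l h s)"
proof -
  assume lh: "l < h"
  have "path (arch l h s)" unfolding path_def arch_def by (intro continuous_intros)
  moreover have "inj_on (arch l h s) {0..1}"
  proof (rule inj_onI)
    fix t1 t2 assume "arch l h s t1 = arch l h s t2"
    then have "Re (arch l h s t1) = Re (arch l h s t2)" by simp
    then show "t1 = t2" using lh by simp
  qed
  ultimately show ?thesis by (simp add: arc_def)
qed

lemma arch_0 [simp]: "arch l h s 0 = complex_of_real l" by (simp add: arch_def)
lemma arch_1 [simp]: "arch l h s 1 = complex_of_real h" by (simp add: arch_def)

lemma arch_point:
  assumes "l < h" "z \<in> path_image (arch l h s)"
  shows "l \<le> Re z \<and> Re z \<le> h \<and> Im z = s * ((Re z - l) * (h - Re z))"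
proof -
  from assms(2) obtain t where t: "t \<in> {0..1}" "z = arch l h s t" unfolding path_image_def by auto
  have "Re z - l = t * (h - l)" "h - Re z = (1 - t) * (h - l)" using t by (simp_all add: algebra_simps)
  moreover have "0 \<le> t * (h - l)" "0 \<le> (1 - t) * (h - l)" using t assms(1) by auto
  ultimately show ?thesis using t by (simp add: mult.assoc)
qed

lemma arch_meet:
  fixes l h l' h' X s s' :: real
  assumes lh: "l < h" "l' < h'" and X: "l \<le> X" "X \<le> h" "l' \<le> X" "X \<le> h'"
   and s: "s = 1 \<or> s = -1" "s' = 1 \<or> s' = -1"
   and eq: "s * ((X - l) * (h - X)) = s' * ((X - l') * (h' - X))"
   and nc: "s = s' \<Longrightarrow> \<not>(l < l' \<and> l' < h \<and> h < h')" "s = s' \<Longrightarrow> \<not>(l' < l \<and> l < h' \<and> h' < h)"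
   and ne: "(l, h) \<noteq> (l', h')"
  shows "(X = l \<or> X = h) \<and> (X = l' \<or> X = h')"
proof -
  have A0: "0 \<le> (X - l) * (h - X)" and B0: "0 \<le> (X - l') * (h' - X)" using X by auto
  show ?thesis
  proof (cases "s = s'")
    case False
    then have "s' = - s" using s by auto
    then have "s * ((X - l) * (h - X) + (X - l') * (h' - X)) = 0" using eq by (simp add: algebra_simps)
    then have "(X - l) * (h - X) + (X - l') * (h' - X) = 0" using s by auto
    then have "(X - l) * (h - X) = 0" "(X - l') * (h' - X) = 0" using A0 B0 by linarith+
    then show ?thesis by auto
  next
    case True
    then have AB: "(X - l) * (h - X) = (X - l') * (h' - X)" using eq s by auto
    have key: "\<And>l h l' h'. l < h \<Longrightarrow> l' < h' \<Longrightarrow> l \<le> l' \<Longrightarrow> h' \<le> h \<Longrightarrow> l' \<le> X \<Longrightarrow> X \<le> h' \<Longrightarrow>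
        (X - l) * (h - X) = (X - l') * (h' - X) \<Longrightarrow> (l, h) \<noteq> (l', h') \<Longrightarrow> (X = l' \<and> l' = l) \<or> (X = h' \<and> h' = h)"
    proof -
      fix l h l' h' :: real
      assume a: "l < h" "l' < h'" "l \<le> l'" "h' \<le> h" "l' \<le> X" "X \<le> h'"
        "(X - l) * (h - X) = (X - l') * (h' - X)" "(l, h) \<noteq> (l', h')"
      have id: "((X - l) * (h - X) - (X - l') * (h' - X)) * (h' - l')
          = (h' - X) * (l' - l) * (h - l') + (X - l') * (h' - l) * (h - h')"
        by (simp add: algebra_simps)
      then have 0: "(h' - X) * (l' - l) * (h - l') + (X - l') * (h' - l) * (h - h') = 0" using a(7) by simp
      have t1: "0 \<le> (h' - X) * (l' - l) * (h - l')" using a by simp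
      have t2: "0 \<le> (X - l') * (h' - l) * (h - h')" using a by simp
      have z1: "(h' - X) * (l' - l) * (h - l') = 0" and z2: "(X - l') * (h' - l) * (h - h') = 0"
        using 0 t1 t2 by linarith+
      have "h - l' > 0" "h' - l > 0" using a by auto
      then have "X = h' \<or> l' = l" "X = l' \<or> h = h'" using z1 z2 by auto
      then show "(X = l' \<and> l' = l) \<or> (X = h' \<and> h' = h)" using a by auto
    qed
    show ?thesis
    proof (cases "h \<le> l' \<or> h' \<le> l")
      case True
      then show ?thesis using X by auto
    next
      case False
      then have ov: "l' < h" "l < h'" by auto
      have "(l \<le> l' \<and> h' \<le> h) \<or> (l' \<le> l \<and> h \<le> h')" using nc[OF True] ov by linarith
      then show ?thesis
      proof
        assume "l \<le> l' \<and> h' \<le> h"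
        then show ?thesis using key[of l h l' h'] lh X AB ne by auto
      next
        assume "l' \<le> l \<and> h \<le> h'"
        then show ?thesis using key[of l' h' l h] lh X AB ne by auto
      qed
    qed
  qed
qed

lemma book_planar:
  fixes pos :: "'a \<Rightarrow> real" and pg :: "'a set \<Rightarrow> bool"
  assumes G: "graph V E" and inj: "inj_on pos V"
    and nc: "\<And>e e'. e \<in> E \<Longrightarrow> e' \<in> E \<Longrightarrow> e \<noteq> e' \<Longrightarrow> pg e = pg e' \<Longrightarrow> \<not> crosses pos e e'"
  shows "planar V E"
proof -
  define f where "f = (\<lambda>x. complex_of_real (pos x))"
  define sg where "sg = (\<lambda>e. if pg e then (1::real) else -1)"
  define \<gamma> where "\<gamma> = (\<lambda>e. arch (Min (pos ` e)) (Max (pos ` e)) (sg e))"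
  have ends: "\<exists>x y. e = {x,y} \<and> x \<in> V \<and> y \<in> V \<and> pos x < pos y" if "e \<in> E" for e
  proof -
    from G that obtain a b where ab: "a \<noteq> b" "a \<in> V" "b \<in> V" "e = {a, b}" unfolding graph_def by meson
    then have "pos a \<noteq> pos b" using inj by (meson inj_onD)
    then show ?thesis
    proof (cases "pos a < pos b")
      case True then show ?thesis using ab by blast
    next
      case False then show ?thesis using ab \<open>pos a \<noteq> pos b\<close> by (intro exI[of _ b] exI[of _ a]) auto
    qed
  qed
  have MinMax: "Min (pos ` {x,y}) = pos x" "Max (pos ` {x,y}) = pos y" if "pos x < pos y" for x y
    using that by auto
  have fV: "inj_on f V" using inj unfolding f_def inj_on_def by simp
  have sgv: "sg e = 1 \<or> sg e = -1" for e unfolding sg_def by auto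
  have edge: "arc (\<gamma> e) \<and> (\<exists>x y. e = {x, y} \<and> pathstart (\<gamma> e) = f x \<and> pathfinish (\<gamma> e) = f y) \<and>
        path_image (\<gamma> e) \<inter> f ` V = f ` e" if eE: "e \<in> E" for e
  proof -
    from ends[OF eE] obtain x y where xy: "e = {x,y}" "x \<in> V" "y \<in> V" "pos x < pos y" by blast
    have g: "\<gamma> e = arch (pos x) (pos y) (sg e)" unfolding \<gamma>_def xy(1) MinMax[OF xy(4)] ..
    have "arc (\<gamma> e)" unfolding g by (rule arch_arc[OF xy(4)])
    moreover have "pathstart (\<gamma> e) = f x" "pathfinish (\<gamma> e) = f y"
      unfolding g pathstart_def pathfinish_def f_def by simp_all
    moreover have "path_image (\<gamma> e) \<inter> f ` V = f ` e"
    proof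
      show "f ` e \<subseteq> path_image (\<gamma> e) \<inter> f ` V"
      proof
        fix z assume "z \<in> f ` e"
        then have "z = f x \<or> z = f y" using xy by auto
        moreover have "f x \<in> path_image (\<gamma> e)" "f y \<in> path_image (\<gamma> e)"
          unfolding g path_image_def f_def by (force intro: image_eqI[of _ _ 0], force intro: image_eqI[of _ _ 1])
        ultimately show "z \<in> path_image (\<gamma> e) \<inter> f ` V" using xy by auto
      qed
    next
      show "path_image (\<gamma> e) \<inter> f ` V \<subseteq> f ` e"
      proof
        fix z assume z: "z \<in> path_image (\<gamma> e) \<inter> f ` V"
        then obtain t where t: "t \<in> {0..1}" "z = arch (pos x) (pos y) (sg e) t"
          unfolding g path_image_def by auto
        from z have "Im z = 0" unfolding f_def by auto
        then have "sg e * (t * (pos y - pos x)) * ((1 - t) * (pos y - pos x)) = 0" using t by simp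
        then have "t = 0 \<or> t = 1" using xy(4) sgv[of e] by auto
        then have "z = f x \<or> z = f y" using t unfolding f_def by auto
        then show "z \<in> f ` e" using xy by auto
      qed
    qed
    ultimately show ?thesis using xy(1) by blast
  qed
  have meet: "path_image (\<gamma> e) \<inter> path_image (\<gamma> e') \<subseteq> f ` (e \<inter> e')"
    if eE: "e \<in> E" and e'E: "e' \<in> E" and ne: "e \<noteq> e'" for e e'
  proof
    fix z assume z: "z \<in> path_image (\<gamma> e) \<inter> path_image (\<gamma> e')"
    from ends[OF eE] obtain x y where xy: "e = {x,y}" "x \<in> V" "y \<in> V" "pos x < pos y" by blast
    from ends[OF e'E] obtain x' y' where xy': "e' = {x',y'}" "x' \<in> V" "y' \<in> V" "pos x' < pos y'" by blast
    have g: "\<gamma> e = arch (pos x) (pos y) (sg e)" unfolding \<gamma>_def xy(1) MinMax[OF xy(4)] ..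
    have g': "\<gamma> e' = arch (pos x') (pos y') (sg e')" unfolding \<gamma>_def xy'(1) MinMax[OF xy'(4)] ..
    have p1: "pos x \<le> Re z \<and> Re z \<le> pos y \<and> Im z = sg e * ((Re z - pos x) * (pos y - Re z))"
      using arch_point[OF xy(4)] z unfolding g by blast
    have p2: "pos x' \<le> Re z \<and> Re z \<le> pos y' \<and> Im z = sg e' * ((Re z - pos x') * (pos y' - Re z))"
      using arch_point[OF xy'(4)] z unfolding g' by blast
    have ncr: "\<not> crosses pos e e'" "\<not> crosses pos e' e" if "sg e = sg e'"
    proof -
      have "pg e = pg e'" using that unfolding sg_def by (auto split: if_splits)
      then show "\<not> crosses pos e e'" "\<not> crosses pos e' e" using nc eE e'E ne by auto
    qed
    have ne2: "(pos x, pos y) \<noteq> (pos x', pos y')"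
    proof
      assume "(pos x, pos y) = (pos x', pos y')"
      then have "x = x'" "y = y'" using inj xy xy' by (auto dest: inj_onD)
      then show False using ne xy xy' by simp
    qed
    have res: "(Re z = pos x \<or> Re z = pos y) \<and> (Re z = pos x' \<or> Re z = pos y')"
    proof (rule arch_meet[OF xy(4) xy'(4)])
      show "pos x \<le> Re z" "Re z \<le> pos y" "pos x' \<le> Re z" "Re z \<le> pos y'" using p1 p2 by auto
      show "sg e = 1 \<or> sg e = -1" "sg e' = 1 \<or> sg e' = -1" by (rule sgv)+
      show "sg e * ((Re z - pos x) * (pos y - Re z)) = sg e' * ((Re z - pos x') * (pos y' - Re z))"
        using p1 p2 by simp
      show "\<not> (pos x < pos x' \<and> pos x' < pos y \<and> pos y < pos y')" if "sg e = sg e'"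
        using ncr(1)[OF that] xy(1) xy'(1) unfolding crosses_def by blast
      show "\<not> (pos x' < pos x \<and> pos x < pos y' \<and> pos y' < pos y)" if "sg e = sg e'"
        using ncr(2)[OF that] xy(1) xy'(1) unfolding crosses_def by blast
      show "(pos x, pos y) \<noteq> (pos x', pos y')" by (rule ne2)
    qed
    then have "Im z = 0" using p1 by auto
    obtain w where w: "w \<in> e" "Re z = pos w" using res xy(1) by auto
    obtain w' where w': "w' \<in> e'" "Re z = pos w'" using res xy'(1) by auto
    have "w \<in> V" "w' \<in> V" using w w' xy xy' by auto
    then have "w = w'" using w w' inj by (metis inj_onD)
    moreover have "z = f w" unfolding f_def using w \<open>Im z = 0\<close> by (simp add: complex_eq_iff)
    ultimately show "z \<in> f ` (e \<inter> e')" using w w' by blast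
  qed
  have "planar_drawing V E f \<gamma>"
    unfolding planar_drawing_def using fV edge meet by blast
  then show ?thesis unfolding planar_def by blast
qed


lemma chain_path:
  assumes "\<And>k. a \<le> k \<Longrightarrow> k < b \<Longrightarrow> adj E' (g k) (g (Suc k))" and "a \<le> b"
  shows "(adj E' ^^ (b - a)) (g a) (g b)"
  using assms
proof (induction b)
  case 0 then show ?case by simp
next
  case (Suc b)
  show ?case
  proof (cases "a = Suc b")
    case True then show ?thesis by simp
  next
    case False
    then have ab: "a \<le> b" using Suc.prems(2) by simp
    have IH: "(adj E' ^^ (b - a)) (g a) (g b)" using Suc.IH[OF _ ab] Suc.prems(1) by simp
    have "adj E' (g b) (g (Suc b))" using Suc.prems(1)[of b] ab by simp
    with IH have "(adj E' ^^ Suc (b - a)) (g a) (g (Suc b))" by (rule relpowp_Suc_I)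
    moreover have "Suc (b - a) = Suc b - a" using ab by simp
    ultimately show ?thesis by simp
  qed
qed

datatype vt = Cy nat | Sp bool nat nat | Apx bool | Pd nat
instance vt :: countable by countable_datatype

locale KG =
  fixes d P :: nat
  assumes d1: "1 \<le> d"
begin

abbreviation "N \<equiv> 3 * d"
definition cv :: "nat \<Rightarrow> vt" where "cv j = Cy (j mod N)"
definition sv :: "bool \<Rightarrow> nat \<Rightarrow> nat \<Rightarrow> vt" where
  "sv \<sigma> j t = (if t = 0 then Apx \<sigma> else if t = d then Cy j else Sp \<sigma> j t)"
definition pv :: "nat \<Rightarrow> vt" where "pv k = (if k = 0 then Apx True else Pd (k - 1))"

definition VA :: "vt set" where
  "VA = Cy ` {..<N} \<union> (\<lambda>(\<sigma>,j,t). Sp \<sigma> j t) ` (UNIV \<times> {..<N} \<times> {1..<d}) \<union> range Apx \<union> Pd ` {..<P}"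
definition Q1 :: "(vt \<times> vt) set" where "Q1 = {(cv j, cv (Suc j)) | j. j < d}"
definition Q2 :: "(vt \<times> vt) set" where "Q2 = {(cv j, cv (Suc j)) | j. d \<le> j \<and> j < N}"
definition spkE :: "bool \<Rightarrow> (vt \<times> vt) set" where
  "spkE \<sigma> = {(sv \<sigma> j t, sv \<sigma> j (Suc t)) | j t. j < N \<and> t < d}"
definition padE :: "(vt \<times> vt) set" where "padE = {(pv (Suc i), pv i) | i. i < P}"
definition EA :: "(vt \<times> vt) set" where "EA = Q1 \<union> Q2 \<union> spkE True \<union> spkE False \<union> padE"
definition ed :: "vt \<times> vt \<Rightarrow> nat set" where "ed p = {to_nat (fst p), to_nat (snd p)}"
definition V :: "nat set" where "V = to_nat ` VA"
definition E :: "nat set set" where "E = ed ` EA"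
definition intact :: "(vt \<times> vt) set \<Rightarrow> nat set set \<Rightarrow> bool" where
  "intact X F \<longleftrightarrow> ed ` X \<subseteq> E - F"

lemma N3: "N \<ge> 3" using d1 by simp

lemma cv_in: "cv j \<in> VA" unfolding cv_def VA_def using N3 by auto
lemma sv_in: "j < N \<Longrightarrow> t \<le> d \<Longrightarrow> sv \<sigma> j t \<in> VA"
  unfolding sv_def VA_def by (auto simp: image_iff)
lemma pv_in: "k \<le> P \<Longrightarrow> pv k \<in> VA"
  unfolding pv_def VA_def by auto

lemma cv_ne: "cv j \<noteq> cv (Suc j)"
  unfolding cv_def using N3 by (auto simp: mod_Suc)
lemma sv_ne: "t < d \<Longrightarrow> sv \<sigma> j t \<noteq> sv \<sigma> j (Suc t)"
  unfolding sv_def by auto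
lemma pv_ne: "pv (Suc i) \<noteq> pv i"
  unfolding pv_def by auto

lemma EA_cases:
  assumes "p \<in> EA"
  obtains (Q1) j where "j < d" "p = (cv j, cv (Suc j))"
  | (Q2) j where "d \<le> j" "j < N" "p = (cv j, cv (Suc j))"
  | (S) \<sigma> j t where "j < N" "t < d" "p = (sv \<sigma> j t, sv \<sigma> j (Suc t))"
  | (Pd) i where "i < P" "p = (pv (Suc i), pv i)"
  using assms unfolding EA_def Q1_def Q2_def spkE_def padE_def by blast

lemma EA_in: "p \<in> EA \<Longrightarrow> fst p \<in> VA \<and> snd p \<in> VA \<and> fst p \<noteq> snd p"
  by (erule EA_cases) (auto simp: cv_in cv_ne sv_in sv_ne pv_in pv_ne)

lemma VA_iff: "a \<in> VA \<longleftrightarrow> (case a of Cy j \<Rightarrow> j < N | Sp \<sigma> j t \<Rightarrow> j < N \<and> 1 \<le> t \<and> t < d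
   | Apx \<sigma> \<Rightarrow> True | Pd i \<Rightarrow> i < P)"
proof (cases a)
  case (Sp \<sigma> j t)
  have "Sp \<sigma> j t \<in> VA \<longleftrightarrow> Sp \<sigma> j t \<in> (\<lambda>(\<sigma>,j,t). Sp \<sigma> j t) ` (UNIV \<times> {..<N} \<times> {1..<d})"
    unfolding VA_def by blast
  also have "\<dots> \<longleftrightarrow> j < N \<and> 1 \<le> t \<and> t < d" by force
  finally show ?thesis using Sp by simp
qed (auto simp: VA_def)

lemma finite_VA: "finite VA" unfolding VA_def by auto

lemma graph_VE: "graph V E"
  unfolding graph_def
proof (intro conjI ballI)
  show "finite V" unfolding V_def using finite_VA by simp
  fix e assume "e \<in> E"
  then obtain p where p: "p \<in> EA" "e = ed p" unfolding E_def by auto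
  from EA_in[OF p(1)] show "\<exists>x y. x \<noteq> y \<and> x \<in> V \<and> y \<in> V \<and> e = {x, y}"
    unfolding p(2) ed_def V_def by (intro exI[of _ "to_nat (fst p)"] exI[of _ "to_nat (snd p)"]) auto
qed

lemma intact_adj: "intact X F \<Longrightarrow> (a, b) \<in> X \<Longrightarrow> adj (E - F) (to_nat a) (to_nat b) \<and> adj (E - F) (to_nat b) (to_nat a)"
proof -
  assume "intact X F" "(a, b) \<in> X"
  then have "ed (a, b) \<in> E - F" unfolding intact_def by blast
  then show ?thesis by (simp add: adj_def ed_def insert_commute)
qed

lemma EA_sub: "Q1 \<subseteq> EA" "Q2 \<subseteq> EA" "spkE \<sigma> \<subseteq> EA" "padE \<subseteq> EA"
  unfolding EA_def by (cases \<sigma>; auto)+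

lemma intact_empty: "X \<subseteq> EA \<Longrightarrow> intact X {}"
  unfolding intact_def E_def by auto

lemma intact_mono: "intact X F \<Longrightarrow> F' \<subseteq> F \<Longrightarrow> intact X F'"
  unfolding intact_def by auto

lemma cyc_path:
  assumes "intact X F" "\<And>k. a \<le> k \<Longrightarrow> k < b \<Longrightarrow> (cv k, cv (Suc k)) \<in> X" "a \<le> b"
  shows "(adj (E - F) ^^ (b - a)) (to_nat (cv a)) (to_nat (cv b))"
  using chain_path[of a b "E - F" "\<lambda>k. to_nat (cv k)"] assms intact_adj by blast

lemma spk_path:
  assumes "intact (spkE \<sigma>) F" "j < N" "a \<le> b" "b \<le> d"
  shows "(adj (E - F) ^^ (b - a)) (to_nat (sv \<sigma> j a)) (to_nat (sv \<sigma> j b))"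
proof (rule chain_path[of a b "E - F" "\<lambda>k. to_nat (sv \<sigma> j k)", OF _ assms(3)])
  fix k assume "a \<le> k" "k < b"
  then have "k < d" using assms by simp
  then have "(sv \<sigma> j k, sv \<sigma> j (Suc k)) \<in> spkE \<sigma>" using assms(2) unfolding spkE_def by blast
  then show "adj (E - F) (to_nat (sv \<sigma> j k)) (to_nat (sv \<sigma> j (Suc k)))" using intact_adj[OF assms(1)] by blast
qed

lemma pad_path:
  assumes "intact padE F" "k \<le> P"
  shows "(adj (E - F) ^^ k) (to_nat (pv 0)) (to_nat (pv k))"
proof -
  have "(adj (E - F) ^^ (k - 0)) (to_nat (pv 0)) (to_nat (pv k))"
  proof (rule chain_path[of 0 k "E - F" "\<lambda>k. to_nat (pv k)"])
    fix i assume "0 \<le> i" "i < k"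
    then have "(pv (Suc i), pv i) \<in> padE" using assms unfolding padE_def by auto
    then show "adj (E - F) (to_nat (pv i)) (to_nat (pv (Suc i)))" using intact_adj[OF assms(1)] by blast
  qed simp
  then show ?thesis by simp
qed

lemma relpow_gconn: "(adj E' ^^ k) x y \<Longrightarrow> gconn E' x y"
  unfolding gconn_alt by blast

lemma connected_VE: "connected_graph V E"
proof -
  define u where "u = to_nat (Cy 0)"
  have allI: "intact X {}" if "X \<subseteq> EA" for X using intact_empty[OF that] .
  have cyc: "intact (Q1 \<union> Q2) {}" using allI EA_sub by (simp add: Un_least)
  have EF: "E - {} = E" by simp
  have c1: "gconn E u (to_nat (Cy j))" if "j < N" for j
  proof -
    have "(adj (E - {}) ^^ (j - 0)) (to_nat (cv 0)) (to_nat (cv j))"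
    proof (rule cyc_path[OF cyc])
      fix k assume "0 \<le> k" "k < j"
      then show "(cv k, cv (Suc k)) \<in> Q1 \<union> Q2"
        using that unfolding Q1_def Q2_def by (cases "k < d") (auto simp: not_less)
    qed simp
    then have "(adj E ^^ j) (to_nat (cv 0)) (to_nat (cv j))" by simp
    then show ?thesis unfolding u_def cv_def using that by (auto intro: relpow_gconn)
  qed
  have c2: "gconn E u (to_nat (sv \<sigma> j t))" if "j < N" "t \<le> d" for \<sigma> j t
  proof -
    have sp: "intact (spkE \<sigma>) {}" using allI EA_sub by simp
    have "(adj E ^^ (d - 0)) (to_nat (sv \<sigma> 0 0)) (to_nat (sv \<sigma> 0 d))" using spk_path[OF sp, of 0 0 d] N3 by simp
    then have g1: "gconn E (to_nat (Apx \<sigma>)) u" unfolding u_def sv_def using d1 by (auto intro: relpow_gconn)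
    have "(adj E ^^ (t - 0)) (to_nat (sv \<sigma> j 0)) (to_nat (sv \<sigma> j t))" using spk_path[OF sp that(1), of 0 t] that(2) by simp
    then have g2: "gconn E (to_nat (Apx \<sigma>)) (to_nat (sv \<sigma> j t))" unfolding sv_def[of _ _ 0] by (auto intro: relpow_gconn)
    show ?thesis using gconn_trans[OF gconn_sym[OF g1] g2] .
  qed
  have c3: "gconn E u (to_nat (pv k))" if "k \<le> P" for k
  proof -
    have pd: "intact padE {}" using allI EA_sub by simp
    have "gconn E (to_nat (pv 0)) (to_nat (pv k))" using pad_path[OF pd that] by (auto intro: relpow_gconn)
    moreover have "gconn E u (to_nat (pv 0))" using c2[where \<sigma>=True and j=0 and t=0] N3 unfolding pv_def sv_def by simp
    ultimately show ?thesis by (meson gconn_trans)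
  qed
  have all: "gconn E u x" if "x \<in> V" for x
  proof -
    from that obtain a where a: "a \<in> VA" "x = to_nat a" unfolding V_def by auto
    show ?thesis
    proof (cases a)
      case (Cy j) then show ?thesis using a c1 unfolding VA_iff by auto
    next
      case (Sp \<sigma> j t)
      then have "j < N" "1 \<le> t" "t < d" using a unfolding VA_iff by auto
      then have "a = sv \<sigma> j t" unfolding sv_def Sp by auto
      then show ?thesis using c2[where \<sigma>=\<sigma> and j=j and t=t] \<open>j < N\<close> \<open>t < d\<close> a by simp
    next
      case (Apx \<sigma>)
      then have "a = sv \<sigma> 0 0" unfolding sv_def by simp
      then show ?thesis using c2[where \<sigma>=\<sigma> and j=0 and t=0] N3 a by simp
    next
      case (Pd i)
      then have "i < P" "a = pv (Suc i)" using a unfolding VA_iff pv_def by auto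
      then show ?thesis using c3[of "Suc i"] a by simp
    qed
  qed
  have "V \<noteq> {}" unfolding V_def VA_def by auto
  moreover have "\<forall>x\<in>V. \<forall>y\<in>V. gconn E x y"
  proof (intro ballI)
    fix x y assume "x \<in> V" "y \<in> V"
    from all[OF this(1)] all[OF this(2)] show "gconn E x y" by (meson gconn_sym gconn_trans)
  qed
  ultimately show ?thesis unfolding connected_graph_def by blast
qed


lemma card_VA: "card VA = N + 2 * (N * (d - 1)) + 2 + P"
proof -
  define A1 where "A1 = Cy ` {..<N}"
  define A2 where "A2 = (\<lambda>(\<sigma>,j,t). Sp \<sigma> j t) ` (UNIV \<times> {..<N} \<times> {1..<d})"
  define A3 where "A3 = range Apx"
  define A4 where "A4 = Pd ` {..<P}"
  have VA: "VA = ((A1 \<union> A2) \<union> A3) \<union> A4" unfolding VA_def A1_def A2_def A3_def A4_def by blast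
  have c1: "card A1 = N" unfolding A1_def by (simp add: card_image inj_on_def)
  have "inj_on (\<lambda>(\<sigma>,j,t). Sp \<sigma> j t) (UNIV \<times> {..<N} \<times> {1..<d})" by (auto simp: inj_on_def)
  then have c2: "card A2 = 2 * (N * (d - 1))" unfolding A2_def by (simp add: card_image card_cartesian_product)
  have "range Apx = {Apx True, Apx False}" by (auto intro: range_eqI[of _ _ True] range_eqI[of _ _ False] simp: image_iff)
  then have c3: "card A3 = 2" unfolding A3_def by simp
  have c4: "card A4 = P" unfolding A4_def by (simp add: card_image inj_on_def)
  have f: "finite A1" "finite A2" "finite A3" "finite A4" unfolding A1_def A2_def A3_def A4_def by auto
  have "card VA = card (A1 \<union> A2 \<union> A3) + card A4"
    unfolding VA by (rule card_Un_disjoint) (use f in \<open>auto simp: A1_def A2_def A3_def A4_def\<close>)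
  also have "card (A1 \<union> A2 \<union> A3) = card (A1 \<union> A2) + card A3"
    by (rule card_Un_disjoint) (use f in \<open>auto simp: A1_def A2_def A3_def\<close>)
  also have "card (A1 \<union> A2) = card A1 + card A2"
    by (rule card_Un_disjoint) (use f in \<open>auto simp: A1_def A2_def\<close>)
  finally show ?thesis using c1 c2 c3 c4 by simp
qed

lemma card_V: "card V = N + 2 * (N * (d - 1)) + 2 + P"
  unfolding V_def using card_VA by (simp add: card_image)

lemma lip_EA:
  assumes "\<And>p. p \<in> EA \<Longrightarrow> \<phi> (snd p) \<le> \<phi> (fst p) + 1 \<and> \<phi> (fst p) \<le> \<phi> (snd p) + 1"
  shows "lip E (\<lambda>n. \<phi> (from_nat n))"
  unfolding lip_def
proof (intro allI impI)
  fix a b assume "{a, b} \<in> E"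
  then obtain p where p: "p \<in> EA" "{a, b} = ed p" unfolding E_def by auto
  then have "(a = to_nat (fst p) \<and> b = to_nat (snd p)) \<or> (a = to_nat (snd p) \<and> b = to_nat (fst p))"
    unfolding ed_def by (simp add: doubleton_eq_iff)
  then show "\<phi> (from_nat b) \<le> \<phi> (from_nat a) + 1" using assms[OF p(1)] by auto
qed

definition phiS :: "bool \<Rightarrow> vt \<Rightarrow> int" where
  "phiS \<sigma> x = (case x of Cy j \<Rightarrow> int d | Sp \<tau> j t \<Rightarrow> (if \<tau> = \<sigma> then int t else int d)
     | Apx \<tau> \<Rightarrow> (if \<tau> = \<sigma> then 0 else int d) | Pd i \<Rightarrow> (if \<sigma> then 0 else int d))"

lemma phiS_sv: "t \<le> d \<Longrightarrow> phiS \<sigma>' (sv \<sigma> j t) = (if \<sigma> = \<sigma>' then int t else int d)"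
  unfolding phiS_def sv_def by auto

lemma phiS_cv: "phiS \<sigma> (cv j) = int d" unfolding phiS_def cv_def by simp
lemma phiS_apx: "phiS \<sigma> (Apx \<sigma>) = 0" unfolding phiS_def by simp

lemma lip_phiS: "lip E (\<lambda>n. phiS \<sigma> (from_nat n))"
proof (rule lip_EA)
  fix p assume "p \<in> EA"
  then show "phiS \<sigma> (snd p) \<le> phiS \<sigma> (fst p) + 1 \<and> phiS \<sigma> (fst p) \<le> phiS \<sigma> (snd p) + 1"
  proof (cases rule: EA_cases)
    case (S \<tau> j t) then show ?thesis by (simp add: phiS_sv)
  next
    case (Pd i) then show ?thesis by (simp add: phiS_def pv_def)
  qed (simp_all add: phiS_cv)
qed

definition phiT :: "(nat \<Rightarrow> int) \<Rightarrow> vt \<Rightarrow> int" where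
  "phiT p x = (case x of Cy j \<Rightarrow> p j | Sp \<tau> j t \<Rightarrow> max (p j) (int d - int t)
     | Apx \<tau> \<Rightarrow> int d | Pd i \<Rightarrow> int d)"

lemma phiT_sv: "0 \<le> p j \<Longrightarrow> p j \<le> int d \<Longrightarrow> t \<le> d \<Longrightarrow> phiT p (sv \<sigma> j t) = max (p j) (int d - int t)"
  unfolding phiT_def sv_def by auto

lemma lip_phiT:
  assumes rng: "\<And>j. j < N \<Longrightarrow> 0 \<le> p j \<and> p j \<le> int d"
    and stp: "\<And>j. j < N \<Longrightarrow> p (Suc j mod N) \<le> p j + 1 \<and> p j \<le> p (Suc j mod N) + 1"
  shows "lip E (\<lambda>n. phiT p (from_nat n))"
proof (rule lip_EA)
  have cyc: "phiT p (cv (Suc j)) \<le> phiT p (cv j) + 1 \<and> phiT p (cv j) \<le> phiT p (cv (Suc j)) + 1" for j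
  proof -
    have "j mod N < N" using N3 by simp
    from stp[OF this] have "p (Suc (j mod N) mod N) \<le> p (j mod N) + 1 \<and> p (j mod N) \<le> p (Suc (j mod N) mod N) + 1" .
    moreover have "Suc (j mod N) mod N = Suc j mod N" by (simp add: mod_Suc_eq)
    ultimately show ?thesis unfolding phiT_def cv_def by simp
  qed
  fix q assume "q \<in> EA"
  then show "phiT p (snd q) \<le> phiT p (fst q) + 1 \<and> phiT p (fst q) \<le> phiT p (snd q) + 1"
  proof (cases rule: EA_cases)
    case (S \<tau> j t)
    then show ?thesis using rng[of j] by (auto simp: phiT_sv max_def)
  next
    case (Pd i) then show ?thesis by (simp add: phiT_def pv_def)
  qed (simp_all add: cyc)
qed

definition psiP :: "nat \<Rightarrow> int" where
  "psiP j = (if j \<le> d then int j else max 0 (2 * int d - int j))"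
definition pmP :: "nat \<Rightarrow> int" where
  "pmP j = (if d \<le> j then \<bar>int j - 2 * int d\<bar> else int d)"

lemma lip_psi: "lip E (\<lambda>n. phiT psiP (from_nat n))"
proof (rule lip_phiT)
  fix j assume j: "j < N"
  show "0 \<le> psiP j \<and> psiP j \<le> int d" unfolding psiP_def by auto
  show "psiP (Suc j mod N) \<le> psiP j + 1 \<and> psiP j \<le> psiP (Suc j mod N) + 1"
  proof (cases "Suc j = N")
    case True
    then show ?thesis unfolding psiP_def using d1 by auto
  next
    case False
    then have "Suc j mod N = Suc j" using j by simp
    then show ?thesis unfolding psiP_def by auto
  qed
qed

lemma lip_pm: "lip E (\<lambda>n. phiT pmP (from_nat n))"
proof (rule lip_phiT)
  fix j assume j: "j < N"
  show "0 \<le> pmP j \<and> pmP j \<le> int d" unfolding pmP_def using j by auto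
  show "pmP (Suc j mod N) \<le> pmP j + 1 \<and> pmP j \<le> pmP (Suc j mod N) + 1"
  proof (cases "Suc j = N")
    case True
    then show ?thesis unfolding pmP_def using d1 by auto
  next
    case False
    then have "Suc j mod N = Suc j" using j by simp
    then show ?thesis unfolding pmP_def by auto
  qed
qed

lemma lev_ok:
  assumes "(adj (E - F) ^^ k) r x" "k \<le> hi" "lip E \<Phi>" "int lo \<le> \<Phi> x - \<Phi> r"
  shows "gconn (E - F) r x \<and> lo \<le> gdist (E - F) r x \<and> gdist (E - F) r x \<le> hi"
proof -
  have g: "gconn (E - F) r x" using assms(1) by (rule relpow_gconn)
  have "\<Phi> x - \<Phi> r \<le> int (gdist (E - F) r x)" by (rule gdist_ge[OF assms(3) _ g]) auto
  moreover have "gdist (E - F) r x \<le> k" using assms(1) by (rule gdist_le)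
  ultimately show ?thesis using g assms(2,4) by simp
qed

lemma lev_ok0:
  assumes "(adj (E - F) ^^ k) r x" "k \<le> hi"
  shows "gconn (E - F) r x \<and> 0 \<le> gdist (E - F) r x \<and> gdist (E - F) r x \<le> hi"
  using relpow_gconn[OF assms(1)] gdist_le[OF assms(1)] assms(2) by simp

lemma gdist_uv: "gdist E (to_nat (Cy 0)) (to_nat (Cy d)) = d"
proof -
  have cyc: "intact Q1 {}" using intact_empty EA_sub by simp
  have "(adj (E - {}) ^^ (d - 0)) (to_nat (cv 0)) (to_nat (cv d))"
    by (rule cyc_path[OF cyc]) (auto simp: Q1_def)
  then have p: "(adj E ^^ d) (to_nat (Cy 0)) (to_nat (Cy d))" unfolding cv_def using d1 by simp
  have "gdist E (to_nat (Cy 0)) (to_nat (Cy d)) \<le> d" using gdist_le[OF p] .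
  moreover have "phiT psiP (Cy d) - phiT psiP (Cy 0) \<le> int (gdist E (to_nat (Cy 0)) (to_nat (Cy d)))"
    using gdist_ge[OF lip_psi _ relpow_gconn[OF p]] by simp
  ultimately show ?thesis unfolding phiT_def psiP_def by simp
qed

abbreviation "u0 \<equiv> to_nat (Cy 0)"

definition rootF :: "nat set set \<Rightarrow> nat" where
  "rootF F = (if intact Q1 F \<and> intact Q2 F \<and> intact (spkE True) F then to_nat (Apx True)
     else if intact Q1 F \<and> intact Q2 F \<and> intact (spkE False) F then to_nat (Apx False)
     else if intact Q2 F then to_nat (cv (2 * d)) else u0)"

definition rt :: "nat \<Rightarrow> nat set set \<Rightarrow> nat set \<Rightarrow> nat" where
  "rt i F C = (if u0 \<in> C then rootF F else (SOME x. x \<in> C))"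

definition lv :: "nat set set \<Rightarrow> nat" where
  "lv F = (if intact Q1 F \<and> intact Q2 F \<and> intact (spkE True) F \<and> intact (spkE False) F then 4
     else if intact Q1 F \<and> intact Q2 F \<and> (intact (spkE True) F \<or> intact (spkE False) F) then 3
     else if intact Q1 F \<and> intact Q2 F then 2
     else if intact Q1 F \<or> intact Q2 F then 1 else 0)"

definition bnd :: "nat \<Rightarrow> nat" where
  "bnd j = (if j = 4 then 2 * d else if j = 3 then d else if j = 2 then d + d div 2 else d)"

lemma cvN: "cv N = Cy 0" unfolding cv_def by simp
lemma cv_lt: "j < N \<Longrightarrow> cv j = Cy j" unfolding cv_def by simp

lemma u0_V: "u0 \<in> V"
proof -
  have "Cy 0 \<in> VA" using N3 by (simp add: VA_iff)
  then show ?thesis unfolding V_def by simp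
qed

lemma apex_conn: "intact (spkE \<sigma>) F \<Longrightarrow> gconn (E - F) u0 (to_nat (Apx \<sigma>))"
proof -
  assume a: "intact (spkE \<sigma>) F"
  have "(adj (E - F) ^^ (d - 0)) (to_nat (sv \<sigma> 0 0)) (to_nat (sv \<sigma> 0 d))"
    by (rule spk_path[OF a]) (use N3 in auto)
  then have "gconn (E - F) (to_nat (Apx \<sigma>)) u0" unfolding sv_def using d1 by (auto intro: relpow_gconn)
  then show ?thesis by (rule gconn_sym)
qed

lemma mid_path: "intact Q2 F \<Longrightarrow> d \<le> a \<Longrightarrow> a \<le> b \<Longrightarrow> b \<le> N \<Longrightarrow> (adj (E - F) ^^ (b - a)) (to_nat (cv a)) (to_nat (cv b))"
proof -
  assume a: "intact Q2 F" "d \<le> a" "a \<le> b" "b \<le> N"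
  show ?thesis
  proof (rule cyc_path[OF a(1) _ a(3)])
    fix k assume "a \<le> k" "k < b"
    then show "(cv k, cv (Suc k)) \<in> Q2" using a unfolding Q2_def by auto
  qed
qed

lemma q1_path: "intact Q1 F \<Longrightarrow> a \<le> b \<Longrightarrow> b \<le> d \<Longrightarrow> (adj (E - F) ^^ (b - a)) (to_nat (cv a)) (to_nat (cv b))"
proof -
  assume a: "intact Q1 F" "a \<le> b" "b \<le> d"
  show ?thesis
  proof (rule cyc_path[OF a(1) _ a(2)])
    fix k assume "a \<le> k" "k < b"
    then show "(cv k, cv (Suc k)) \<in> Q1" using a unfolding Q1_def by auto
  qed
qed

lemma mid_conn: "intact Q2 F \<Longrightarrow> gconn (E - F) u0 (to_nat (cv (2 * d)))"
proof -
  assume a: "intact Q2 F"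
  have "(adj (E - F) ^^ (N - 2 * d)) (to_nat (cv (2 * d))) (to_nat (cv N))"
    by (rule mid_path[OF a]) auto
  then have "gconn (E - F) (to_nat (cv (2 * d))) u0" unfolding cvN by (rule relpow_gconn)
  then show ?thesis by (rule gconn_sym)
qed

lemma rootF_conn: "gconn (E - F) u0 (rootF F)"
  unfolding rootF_def using apex_conn mid_conn gconn_refl by auto

lemma rootF_V: "rootF F \<in> V"
proof -
  have "Apx \<sigma> \<in> VA" for \<sigma> by (simp add: VA_iff)
  then show ?thesis unfolding rootF_def V_def using cv_in u0_V[unfolded V_def] by auto
qed

lemma Cu_u0: "u0 \<in> {y \<in> V. gconn (E - F) u0 y}" using u0_V by (simp add: gconn_refl)

lemma rt_Cu: "rt i F {y \<in> V. gconn (E - F) u0 y} = rootF F"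
  unfolding rt_def using Cu_u0 by simp

lemma valid_rt: "valid_root_rule V E rt"
  unfolding valid_root_rule_def
proof (intro allI impI)
  fix i F C assume FE: "F \<subseteq> E" and C: "C \<in> components V (E - F)"
  show "rt i F C \<in> C"
  proof (cases "u0 \<in> C")
    case True
    then have "C = {y \<in> V. gconn (E - F) u0 y}" by (rule components_eq[OF C])
    then show ?thesis unfolding rt_def using True rootF_V rootF_conn by auto
  next
    case False
    from C obtain x where "x \<in> V" "C = {y \<in> V. gconn (E - F) x y}" unfolding components_def by blast
    then have "x \<in> C" by (simp add: gconn_refl)
    then show ?thesis unfolding rt_def using False by (auto intro: someI)
  qed
qed

definition levok :: "nat set set \<Rightarrow> nat \<Rightarrow> (vt \<times> vt) set \<Rightarrow> nat \<Rightarrow> nat \<Rightarrow> bool" where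
  "levok F r X lo hi \<longleftrightarrow> (\<forall>e\<in>ed ` X. \<forall>x\<in>e. gconn (E - F) r x \<and> lo \<le> gdist (E - F) r x \<and> gdist (E - F) r x \<le> hi)"

lemma levokI:
  assumes "\<And>a b. (a, b) \<in> X \<Longrightarrow> LV (to_nat a) \<and> LV (to_nat b)"
    and "\<And>x. LV x \<Longrightarrow> gconn (E - F) r x \<and> lo \<le> gdist (E - F) r x \<and> gdist (E - F) r x \<le> hi"
  shows "levok F r X lo hi"
  unfolding levok_def ed_def using assms by fastforce

lemma spk_verts: "(a, b) \<in> spkE \<sigma> \<Longrightarrow> \<exists>j t t'. j < N \<and> t \<le> d \<and> t' \<le> d \<and> a = sv \<sigma> j t \<and> b = sv \<sigma> j t'"
proof -
  assume "(a, b) \<in> spkE \<sigma>"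
  then obtain j t where "j < N" "t < d" "a = sv \<sigma> j t" "b = sv \<sigma> j (Suc t)" unfolding spkE_def by blast
  then show ?thesis by (intro exI[of _ j] exI[of _ t] exI[of _ "Suc t"]) simp
qed

lemma q1_verts: "(a, b) \<in> Q1 \<Longrightarrow> \<exists>j j'. j \<le> d \<and> j' \<le> d \<and> a = cv j \<and> b = cv j'"
proof -
  assume "(a, b) \<in> Q1"
  then obtain j where "j < d" "a = cv j" "b = cv (Suc j)" unfolding Q1_def by blast
  then show ?thesis by (intro exI[of _ j] exI[of _ "Suc j"]) simp
qed

lemma q2_verts: "(a, b) \<in> Q2 \<Longrightarrow> \<exists>j j'. d \<le> j \<and> j \<le> N \<and> d \<le> j' \<and> j' \<le> N \<and> a = cv j \<and> b = cv j'"
proof -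
  assume "(a, b) \<in> Q2"
  then obtain j where "d \<le> j" "j < N" "a = cv j" "b = cv (Suc j)" unfolding Q2_def by blast
  then show ?thesis by (intro exI[of _ j] exI[of _ "Suc j"]) simp
qed

lemma levA: "intact (spkE \<sigma>) F \<Longrightarrow> levok F (to_nat (Apx \<sigma>)) (spkE \<sigma>) 0 d"
proof -
  assume a: "intact (spkE \<sigma>) F"
  show ?thesis
  proof (rule levokI[where LV = "\<lambda>x. \<exists>j t. j < N \<and> t \<le> d \<and> x = to_nat (sv \<sigma> j t)"])
    fix a b assume "(a, b) \<in> spkE \<sigma>"
    then show "(\<exists>j t. j < N \<and> t \<le> d \<and> to_nat a = to_nat (sv \<sigma> j t)) \<and> (\<exists>j t. j < N \<and> t \<le> d \<and> to_nat b = to_nat (sv \<sigma> j t))"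
      using spk_verts by blast
  next
    fix x assume "\<exists>j t. j < N \<and> t \<le> d \<and> x = to_nat (sv \<sigma> j t)"
    then obtain j t where jt: "j < N" "t \<le> d" "x = to_nat (sv \<sigma> j t)" by blast
    have "(adj (E - F) ^^ (t - 0)) (to_nat (sv \<sigma> j 0)) (to_nat (sv \<sigma> j t))"
      by (rule spk_path[OF a jt(1)]) (use jt in auto)
    then have "(adj (E - F) ^^ t) (to_nat (Apx \<sigma>)) x" using jt unfolding sv_def[of _ _ 0] by simp
    from lev_ok0[OF this jt(2)] show "gconn (E - F) (to_nat (Apx \<sigma>)) x \<and> 0 \<le> gdist (E - F) (to_nat (Apx \<sigma>)) x \<and> gdist (E - F) (to_nat (Apx \<sigma>)) x \<le> d" .
  qed
qed

lemma apex_cv: "intact (spkE \<sigma>) F \<Longrightarrow> gconn (E - F) (to_nat (Apx \<sigma>)) (to_nat (cv j)) \<and> d \<le> gdist (E - F) (to_nat (Apx \<sigma>)) (to_nat (cv j)) \<and> gdist (E - F) (to_nat (Apx \<sigma>)) (to_nat (cv j)) \<le> d"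
proof -
  assume a: "intact (spkE \<sigma>) F"
  have jN: "j mod N < N" using N3 by simp
  have "(adj (E - F) ^^ (d - 0)) (to_nat (sv \<sigma> (j mod N) 0)) (to_nat (sv \<sigma> (j mod N) d))"
    by (rule spk_path[OF a jN]) auto
  then have p: "(adj (E - F) ^^ d) (to_nat (Apx \<sigma>)) (to_nat (cv j))" unfolding sv_def cv_def using d1 by simp
  show ?thesis
    by (rule lev_ok[OF p le_refl lip_phiS[of \<sigma>]]) (simp add: phiS_cv phiS_apx)
qed

lemma levB1: "intact (spkE \<sigma>) F \<Longrightarrow> levok F (to_nat (Apx \<sigma>)) Q1 d d"
  by (rule levokI[where LV = "\<lambda>x. \<exists>j. x = to_nat (cv j)"]) (use q1_verts apex_cv in blast)+

lemma levB2: "intact (spkE \<sigma>) F \<Longrightarrow> levok F (to_nat (Apx \<sigma>)) Q2 d d"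
  by (rule levokI[where LV = "\<lambda>x. \<exists>j. x = to_nat (cv j)"]) (use q2_verts apex_cv in blast)+

lemma levC: "intact (spkE \<sigma>) F \<Longrightarrow> intact (spkE (\<not>\<sigma>)) F \<Longrightarrow> levok F (to_nat (Apx \<sigma>)) (spkE (\<not>\<sigma>)) d (2 * d)"
proof -
  assume a: "intact (spkE \<sigma>) F" and b: "intact (spkE (\<not>\<sigma>)) F"
  show ?thesis
  proof (rule levokI[where LV = "\<lambda>x. \<exists>j t. j < N \<and> t \<le> d \<and> x = to_nat (sv (\<not>\<sigma>) j t)"])
    fix a b assume "(a, b) \<in> spkE (\<not>\<sigma>)"
    then show "(\<exists>j t. j < N \<and> t \<le> d \<and> to_nat a = to_nat (sv (\<not>\<sigma>) j t)) \<and> (\<exists>j t. j < N \<and> t \<le> d \<and> to_nat b = to_nat (sv (\<not>\<sigma>) j t))"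
      using spk_verts by blast
  next
    fix x assume "\<exists>j t. j < N \<and> t \<le> d \<and> x = to_nat (sv (\<not>\<sigma>) j t)"
    then obtain j t where jt: "j < N" "t \<le> d" "x = to_nat (sv (\<not>\<sigma>) j t)" by blast
    have p1: "(adj (E - F) ^^ (d - 0)) (to_nat (sv \<sigma> j 0)) (to_nat (sv \<sigma> j d))"
      by (rule spk_path[OF a jt(1)]) auto
    have p2: "(adj (E - F) ^^ (d - t)) (to_nat (sv (\<not>\<sigma>) j t)) (to_nat (sv (\<not>\<sigma>) j d))"
      by (rule spk_path[OF b jt(1) jt(2)]) simp
    have e1: "sv \<sigma> j 0 = Apx \<sigma>" "sv \<sigma> j d = Cy j" "sv (\<not>\<sigma>) j d = Cy j" unfolding sv_def using d1 by auto
    have "(adj (E - F) ^^ (d + (d - t))) (to_nat (Apx \<sigma>)) x"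
      using relpowp_adj_trans[OF p1[unfolded e1, simplified] relpowp_adj_sym[OF p2[unfolded e1]]] jt(3) by simp
    moreover have "d + (d - t) \<le> 2 * d" by simp
    ultimately show "gconn (E - F) (to_nat (Apx \<sigma>)) x \<and> d \<le> gdist (E - F) (to_nat (Apx \<sigma>)) x \<and> gdist (E - F) (to_nat (Apx \<sigma>)) x \<le> 2 * d"
      by (rule lev_ok[OF _ _ lip_phiS[of \<sigma>]]) (use jt in \<open>simp add: phiS_sv phiS_apx\<close>)
  qed
qed

lemma levD: "intact Q2 F \<Longrightarrow> levok F (to_nat (cv (2 * d))) Q2 0 d"
proof -
  assume a: "intact Q2 F"
  show ?thesis
  proof (rule levokI[where LV = "\<lambda>x. \<exists>j. d \<le> j \<and> j \<le> N \<and> x = to_nat (cv j)"])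
    fix a b assume "(a, b) \<in> Q2"
    then show "(\<exists>j. d \<le> j \<and> j \<le> N \<and> to_nat a = to_nat (cv j)) \<and> (\<exists>j. d \<le> j \<and> j \<le> N \<and> to_nat b = to_nat (cv j))"
      using q2_verts by blast
  next
    fix x assume "\<exists>j. d \<le> j \<and> j \<le> N \<and> x = to_nat (cv j)"
    then obtain j where j: "d \<le> j" "j \<le> N" "x = to_nat (cv j)" by blast
    show "gconn (E - F) (to_nat (cv (2 * d))) x \<and> 0 \<le> gdist (E - F) (to_nat (cv (2 * d))) x \<and> gdist (E - F) (to_nat (cv (2 * d))) x \<le> d"
    proof (cases "j \<le> 2 * d")
      case True
      have "(adj (E - F) ^^ (2 * d - j)) (to_nat (cv j)) (to_nat (cv (2 * d)))"
        by (rule mid_path[OF a j(1) True]) simp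
      from lev_ok0[where hi=d, OF relpowp_adj_sym[OF this]] j(1) show ?thesis unfolding j(3) by simp
    next
      case False
      have "(adj (E - F) ^^ (j - 2 * d)) (to_nat (cv (2 * d))) (to_nat (cv j))"
        by (rule mid_path[OF a]) (use False j in auto)
      from lev_ok0[where hi=d, OF this] j(2) show ?thesis unfolding j(3) by simp
    qed
  qed
qed

lemma levE: "intact Q1 F \<Longrightarrow> intact Q2 F \<Longrightarrow> levok F (to_nat (cv (2 * d))) Q1 d (d + d div 2)"
proof -
  assume a1: "intact Q1 F" and a2: "intact Q2 F"
  show ?thesis
  proof (rule levokI[where LV = "\<lambda>x. \<exists>j. j \<le> d \<and> x = to_nat (cv j)"])
    fix a b assume "(a, b) \<in> Q1"
    then show "(\<exists>j. j \<le> d \<and> to_nat a = to_nat (cv j)) \<and> (\<exists>j. j \<le> d \<and> to_nat b = to_nat (cv j))"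
      using q1_verts by blast
  next
    fix x assume "\<exists>j. j \<le> d \<and> x = to_nat (cv j)"
    then obtain j where j: "j \<le> d" "x = to_nat (cv j)" by blast
    have pot: "int d \<le> phiT pmP (from_nat x) - phiT pmP (from_nat (to_nat (cv (2 * d))))"
      using j d1 by (simp add: cv_lt phiT_def pmP_def)
    show "gconn (E - F) (to_nat (cv (2 * d))) x \<and> d \<le> gdist (E - F) (to_nat (cv (2 * d))) x \<and> gdist (E - F) (to_nat (cv (2 * d))) x \<le> d + d div 2"
    proof (cases "j \<le> d div 2")
      case True
      have p1: "(adj (E - F) ^^ (N - 2 * d)) (to_nat (cv (2 * d))) (to_nat (cv N))"
        by (rule mid_path[OF a2]) auto
      have p2: "(adj (E - F) ^^ (j - 0)) (to_nat (cv 0)) (to_nat (cv j))"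
        by (rule q1_path[OF a1]) (use j in auto)
      have cv0: "cv N = cv 0" unfolding cv_def by simp
      have "(adj (E - F) ^^ (d + j)) (to_nat (cv (2 * d))) x"
        using relpowp_adj_trans[OF p1 p2[unfolded cv0[symmetric]]] j by simp
      then show ?thesis by (rule lev_ok[OF _ _ lip_pm _]) (use True pot in auto)
    next
      case False
      have p1: "(adj (E - F) ^^ (2 * d - d)) (to_nat (cv d)) (to_nat (cv (2 * d)))"
        by (rule mid_path[OF a2]) auto
      have p2: "(adj (E - F) ^^ (d - j)) (to_nat (cv j)) (to_nat (cv d))"
        by (rule q1_path[OF a1]) (use j in auto)
      have "(adj (E - F) ^^ (d + (d - j))) (to_nat (cv (2 * d))) x"
        using relpowp_adj_trans[OF relpowp_adj_sym[OF p1] relpowp_adj_sym[OF p2]] j by simp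
      then show ?thesis by (rule lev_ok[OF _ _ lip_pm _]) (use False pot in auto)
    qed
  qed
qed

lemma levF: "intact Q1 F \<Longrightarrow> levok F u0 Q1 0 d"
proof -
  assume a1: "intact Q1 F"
  show ?thesis
  proof (rule levokI[where LV = "\<lambda>x. \<exists>j. j \<le> d \<and> x = to_nat (cv j)"])
    fix a b assume "(a, b) \<in> Q1"
    then show "(\<exists>j. j \<le> d \<and> to_nat a = to_nat (cv j)) \<and> (\<exists>j. j \<le> d \<and> to_nat b = to_nat (cv j))"
      using q1_verts by blast
  next
    fix x assume "\<exists>j. j \<le> d \<and> x = to_nat (cv j)"
    then obtain j where j: "j \<le> d" "x = to_nat (cv j)" by blast
    have "(adj (E - F) ^^ (j - 0)) (to_nat (cv 0)) (to_nat (cv j))"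
      by (rule q1_path[OF a1]) (use j in auto)
    then have "(adj (E - F) ^^ j) u0 x" using j unfolding cv_def by simp
    from lev_ok0[OF this j(1)] show "gconn (E - F) u0 x \<and> 0 \<le> gdist (E - F) u0 x \<and> gdist (E - F) u0 x \<le> d" .
  qed
qed

lemma surv_conc:
  fixes kk :: "nat set \<Rightarrow> nat"
  assumes kkR: "\<forall>C\<in>components V (E - F). kk C < R"
   and XI: "intact X F" and lev: "levok F (rootF F) X lo hi" and hiR: "hi \<le> R"
   and kout: "\<not> (lo \<le> kk {y\<in>V. gconn (E-F) u0 y} \<and> kk {y\<in>V. gconn (E-F) u0 y} < hi)"
  shows "intact X (F \<union> (\<Union>C\<in>components V (E - F). cut_edges (E - F) C (rt i F C) R (kk C)))"
proof -
  have XF: "ed ` X \<subseteq> E - F" using XI unfolding intact_def .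
  have "ed ` X \<inter> (F \<union> (\<Union>C\<in>components V (E - F). cut_edges (E - F) C (rt i F C) R (kk C))) = {}"
  proof (rule survive[OF graph_VE u0_V XF kkR, where lo=lo and hi=hi])
    show "gconn (E - F) u0 (rt i F {y\<in>V. gconn (E-F) u0 y})" unfolding rt_Cu by (rule rootF_conn)
    fix e x assume "e \<in> ed ` X" "x \<in> e"
    then show "gconn (E - F) (rt i F {y\<in>V. gconn (E-F) u0 y}) x \<and> lo \<le> gdist (E - F) (rt i F {y\<in>V. gconn (E-F) u0 y}) x
        \<and> gdist (E - F) (rt i F {y\<in>V. gconn (E-F) u0 y}) x \<le> hi"
      using lev unfolding levok_def rt_Cu by blast
  qed (use hiR kout in auto)
  then show ?thesis using XF unfolding intact_def by blast
qed

lemma lv4: "lv F = 4 \<longleftrightarrow> intact Q1 F \<and> intact Q2 F \<and> intact (spkE True) F \<and> intact (spkE False) F"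
  unfolding lv_def by auto
lemma lv_ge3: "intact Q1 F \<Longrightarrow> intact Q2 F \<Longrightarrow> intact (spkE \<sigma>) F \<Longrightarrow> 3 \<le> lv F"
  unfolding lv_def by (cases \<sigma>) auto
lemma lv_ge2: "intact Q1 F \<Longrightarrow> intact Q2 F \<Longrightarrow> 2 \<le> lv F"
  unfolding lv_def by auto
lemma lv_ge1: "intact Q1 F \<or> intact Q2 F \<Longrightarrow> 1 \<le> lv F"
  unfolding lv_def by auto
lemma lv_le4: "lv F \<le> 4" unfolding lv_def by auto

lemma phase_main:
  fixes kk :: "nat set \<Rightarrow> nat"
  assumes kkR: "\<forall>C\<in>components V (E - F). kk C < R" and R: "2 * d < R" and l1: "1 \<le> lv F"
  shows "lv F \<le> Suc (lv (F \<union> (\<Union>C\<in>components V (E - F). cut_edges (E - F) C (rt i F C) R (kk C))))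
     \<and> (bnd (lv F) \<le> kk {y\<in>V. gconn (E-F) u0 y} \<longrightarrow> lv F \<le> lv (F \<union> (\<Union>C\<in>components V (E - F). cut_edges (E - F) C (rt i F C) R (kk C))))"
proof -
  define F' where "F' = F \<union> (\<Union>C\<in>components V (E - F). cut_edges (E - F) C (rt i F C) R (kk C))"
  define k where "k = kk {y\<in>V. gconn (E-F) u0 y}"
  have S: "\<And>X lo hi. intact X F \<Longrightarrow> levok F (rootF F) X lo hi \<Longrightarrow> hi \<le> R \<Longrightarrow> \<not>(lo \<le> k \<and> k < hi) \<Longrightarrow> intact X F'"
    unfolding F'_def k_def by (rule surv_conc[OF kkR])
  have R1: "d \<le> R" "2 * d \<le> R" "d + d div 2 \<le> R" using R by auto
  have "lv F = 4 \<or> lv F = 3 \<or> lv F = 2 \<or> lv F = 1" using l1 lv_le4[of F] by linarith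
  then have "lv F \<le> Suc (lv F') \<and> (bnd (lv F) \<le> k \<longrightarrow> lv F \<le> lv F')"
  proof (elim disjE)
    assume L: "lv F = 4"
    then have I: "intact Q1 F" "intact Q2 F" "intact (spkE True) F" "intact (spkE False) F" using lv4 by auto
    have rt: "rootF F = to_nat (Apx True)" unfolding rootF_def using I by simp
    have q1: "intact Q1 F'" by (rule S[OF I(1) levB1[OF I(3), folded rt] R1(1)]) (simp add: rt)
    have q2: "intact Q2 F'" by (rule S[OF I(2) levB2[OF I(3), folded rt] R1(1)]) (simp add: rt)
    have xT: "d \<le> k \<Longrightarrow> intact (spkE True) F'" by (rule S[OF I(3) levA[OF I(3), folded rt] R1(1)]) (auto simp: rt)
    have xF: "k < d \<or> 2 * d \<le> k \<Longrightarrow> intact (spkE False) F'"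
      by (rule S[OF I(4) levC[OF I(3), simplified, OF I(4), folded rt] R1(2)]) (auto simp: rt)
    have "3 \<le> lv F'"
    proof (cases "d \<le> k")
      case True then show ?thesis using lv_ge3[OF q1 q2 xT] by simp
    next
      case False then show ?thesis using lv_ge3[OF q1 q2 xF] by simp
    qed
    moreover have "2 * d \<le> k \<Longrightarrow> lv F' = 4" using lv4 q1 q2 xT xF by auto
    ultimately show ?thesis using L by (auto simp: bnd_def)
  next
    assume L: "lv F = 3"
    then have I: "intact Q1 F" "intact Q2 F" "intact (spkE True) F \<or> intact (spkE False) F"
      unfolding lv_def by (auto split: if_splits)
    obtain \<sigma> where sg: "intact (spkE \<sigma>) F" "rootF F = to_nat (Apx \<sigma>)"
    proof (cases "intact (spkE True) F")
      case True then show ?thesis using that[of True] I unfolding rootF_def by simp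
    next
      case False then show ?thesis using that[of False] I unfolding rootF_def by simp
    qed
    have q1: "intact Q1 F'" by (rule S[OF I(1) levB1[OF sg(1), folded sg(2)] R1(1)]) (simp add: sg)
    have q2: "intact Q2 F'" by (rule S[OF I(2) levB2[OF sg(1), folded sg(2)] R1(1)]) (simp add: sg)
    have x: "d \<le> k \<Longrightarrow> intact (spkE \<sigma>) F'" by (rule S[OF sg(1) levA[OF sg(1), folded sg(2)] R1(1)]) (auto simp: sg)
    have "2 \<le> lv F'" by (rule lv_ge2[OF q1 q2])
    moreover have "d \<le> k \<Longrightarrow> 3 \<le> lv F'" using lv_ge3[OF q1 q2 x] by simp
    ultimately show ?thesis using L by (auto simp: bnd_def)
  next
    assume L: "lv F = 2"
    then have I: "intact Q1 F" "intact Q2 F" "\<not> intact (spkE True) F" "\<not> intact (spkE False) F"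
      unfolding lv_def by (auto split: if_splits)
    have rt: "rootF F = to_nat (cv (2 * d))" unfolding rootF_def using I by simp
    have q2: "d \<le> k \<Longrightarrow> intact Q2 F'" by (rule S[OF I(2) levD[OF I(2), folded rt] R1(1)]) (auto simp: rt)
    have q1: "k < d \<or> d + d div 2 \<le> k \<Longrightarrow> intact Q1 F'"
      by (rule S[OF I(1) levE[OF I(1,2), folded rt] R1(3)]) (auto simp: rt)
    have "1 \<le> lv F'" using lv_ge1 q1 q2 by (cases "d \<le> k") auto
    moreover have "d + d div 2 \<le> k \<Longrightarrow> 2 \<le> lv F'" using lv_ge2 q1 q2 by auto
    ultimately show ?thesis using L by (auto simp: bnd_def)
  next
    assume L: "lv F = 1"
    then have I: "intact Q1 F \<or> intact Q2 F" "\<not> (intact Q1 F \<and> intact Q2 F)"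
      unfolding lv_def by (auto split: if_splits)
    have "d \<le> k \<Longrightarrow> 1 \<le> lv F'"
    proof -
      assume dk: "d \<le> k"
      show ?thesis
      proof (cases "intact Q2 F")
        case True
        have rt: "rootF F = to_nat (cv (2 * d))" unfolding rootF_def using I True by auto
        have "intact Q2 F'" by (rule S[OF True levD[OF True, folded rt] R1(1)]) (use dk in \<open>auto simp: rt\<close>)
        then show ?thesis using lv_ge1 by auto
      next
        case False
        then have Q1: "intact Q1 F" using I by auto
        have rt: "rootF F = u0" unfolding rootF_def using False by auto
        have "intact Q1 F'" by (rule S[OF Q1 levF[OF Q1, folded rt] R1(1)]) (use dk in auto)
        then show ?thesis using lv_ge1 by auto
      qed
    qed
    then show ?thesis using L by (auto simp: bnd_def)
  qed
  then show ?thesis unfolding F'_def k_def .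
qed

lemma lv_conn: "1 \<le> lv F \<Longrightarrow> gconn (E - F) u0 (to_nat (Cy d))"
proof -
  assume "1 \<le> lv F"
  then have "intact Q1 F \<or> intact Q2 F" unfolding lv_def by (auto split: if_splits)
  then show ?thesis
  proof
    assume a: "intact Q1 F"
    have "(adj (E - F) ^^ (d - 0)) (to_nat (cv 0)) (to_nat (cv d))" by (rule q1_path[OF a]) auto
    then show ?thesis using d1 by (simp add: cv_lt relpow_gconn)
  next
    assume a: "intact Q2 F"
    have "(adj (E - F) ^^ (N - d)) (to_nat (cv d)) (to_nat (cv N))" by (rule mid_path[OF a]) auto
    then have "gconn (E - F) (to_nat (Cy d)) u0" using d1 by (simp add: cv_lt cvN relpow_gconn)
    then show ?thesis by (rule gconn_sym)
  qed
qed

lemma finite_comps: "finite (components V E')"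
  unfolding components_def V_def using finite_VA by simp

lemma sep_bound:
  assumes R: "2 * d < R"
  shows "kpr_sep_prob V E R rt u0 (to_nat (Cy d)) \<le> 8 * (real d / real R) ^ 4"
proof -
  have R0: "R > 0" using R by simp
  define p where "p = (\<lambda>j. real (bnd j) / real R)"
  have lv0: "lv {} = 4" using lv4 intact_empty EA_sub by auto
  have main: "(\<forall>x\<in>set_pmf (kpr_iter V E R rt 4). x \<in> {F. F \<subseteq> E} \<and> 4 \<le> lv x + 4)
     \<and> measure_pmf.prob (kpr_iter V E R rt 4) {x. lv x + 4 \<le> 4} \<le> (\<Prod>j\<in>{4-4<..4}. p j)"
  proof (rule chain_bound[where it = "kpr_iter V E R rt" and ph = "kpr_phase V E R rt" and xinit = "{}"
        and S = "{F. F \<subseteq> E}" and lv = lv and m = 4 and p = p])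
    show "kpr_iter V E R rt 0 = return_pmf {}" by simp
    show "\<And>t. kpr_iter V E R rt (Suc t) = kpr_iter V E R rt t \<bind> kpr_phase V E R rt (Suc t)" by simp
    show "{} \<in> {F. F \<subseteq> E}" "lv {} = 4" using lv0 by auto
    show "\<And>j. 0 \<le> p j" unfolding p_def by simp
  next
    fix i x y assume x: "x \<in> {F. F \<subseteq> E}" and l: "1 \<le> lv x" and y: "y \<in> set_pmf (kpr_phase V E R rt i x)"
    from phase_support[OF finite_comps R0 y] obtain kk where kk: "\<forall>C\<in>components V (E - x). kk C < R"
      and yeq: "y = x \<union> (\<Union>C\<in>components V (E - x). cut_edges (E - x) C (rt i x C) R (kk C))" by blast
    have "y \<subseteq> E" using x unfolding yeq cut_edges_def by auto
    moreover have "lv x \<le> Suc (lv y)" using phase_main[OF kk R l] unfolding yeq by blast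
    ultimately show "y \<in> {F. F \<subseteq> E} \<and> lv x \<le> Suc (lv y)" by simp
  next
    fix i x assume x: "x \<in> {F. F \<subseteq> E}" and l: "1 \<le> lv x"
    have "measure_pmf.prob (kpr_phase V E R rt i x) {F'. \<not> (lv x \<le> lv F')} \<le> real (bnd (lv x)) / real R"
    proof (rule phase_prob[OF finite_comps R0 u0_V])
      fix kk assume "\<forall>C\<in>components V (E - x). kk C < R" "bnd (lv x) \<le> kk {y \<in> V. gconn (E - x) u0 y}"
      then show "lv x \<le> lv (x \<union> (\<Union>C\<in>components V (E - x). cut_edges (E - x) C (rt i x C) R (kk C)))"
        using phase_main[OF _ R l] by blast
    qed
    then show "measure_pmf.prob (kpr_phase V E R rt i x) {y. lv y < lv x} \<le> p (lv x)"
      unfolding p_def by (simp add: not_le)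
  qed simp
  have "kpr_sep_prob V E R rt u0 (to_nat (Cy d)) \<le> measure_pmf.prob (kpr_iter V E R rt 4) {x. lv x + 4 \<le> 4}"
    unfolding kpr_sep_prob_def
  proof (rule measure_pmf.finite_measure_mono)
    show "{F. \<not> gconn (E - F) u0 (to_nat (Cy d))} \<subseteq> {x. lv x + 4 \<le> 4}"
      using lv_conn by force
  qed simp
  also have "\<dots> \<le> (\<Prod>j\<in>{4-4<..4::nat}. p j)" using main by blast
  also have "(\<Prod>j\<in>{4-4<..4::nat}. p j) = p 1 * p 2 * p 3 * p 4"
  proof -
    have "{4-4<..4::nat} = {1,2,3,4}" by auto
    then show ?thesis by (simp add: mult.assoc)
  qed
  also have "\<dots> = real (d * (d + d div 2) * d * (2 * d)) / real R ^ 4"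
    unfolding p_def bnd_def by (simp add: power_def field_simps)
  also have "\<dots> \<le> real (8 * d ^ 4) / real R ^ 4"
  proof (rule divide_right_mono)
    have "d * (d + d div 2) * d * (2 * d) \<le> d * (2 * d) * d * (2 * d)"
      by (intro mult_le_mono) auto
    also have "\<dots> \<le> 8 * d ^ 4" by (simp add: power_def)
    finally show "real (d * (d + d div 2) * d * (2 * d)) \<le> real (8 * d ^ 4)" by linarith
  qed simp
  also have "\<dots> = 8 * (real d / real R) ^ 4" by (simp add: power_divide)
  finally show ?thesis .
qed

abbreviation "M \<equiv> P + 2 * d + 1"

definition key :: "vt \<Rightarrow> nat \<times> nat" where
  "key x = (case x of Cy j \<Rightarrow> (if j = 0 then (2 * N - 1, d) else (j, d))
    | Sp \<sigma> j t \<Rightarrow> (if \<sigma> then (if j = 0 then (2 * N - 1, 2 * d - t) else (j, t))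
                  else (if j = 0 then (2 * N - 1, t) else (2 * N - 1 - j, d - t)))
    | Apx \<sigma> \<Rightarrow> (if \<sigma> then (0, P) else (2 * N - 1, 0))
    | Pd i \<Rightarrow> (0, P - 1 - i))"

definition posn :: "vt \<Rightarrow> nat" where "posn x = fst (key x) * M + snd (key x)"

lemma key_w: "x \<in> VA \<Longrightarrow> snd (key x) < M"
  by (cases x) (auto simp: VA_iff key_def)

lemma lex_lt: "w1 < (m::nat) \<Longrightarrow> w2 < m \<Longrightarrow> (g1 * m + w1 < g2 * m + w2) \<longleftrightarrow> (g1 < g2 \<or> g1 = g2 \<and> w1 < w2)"
proof
  assume w: "w1 < m" "w2 < m" and l: "g1 * m + w1 < g2 * m + w2"
  show "g1 < g2 \<or> g1 = g2 \<and> w1 < w2"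
  proof (rule ccontr)
    assume "\<not> (g1 < g2 \<or> g1 = g2 \<and> w1 < w2)"
    then have "g2 < g1 \<or> g1 = g2 \<and> w2 \<le> w1" by auto
    then show False
    proof
      assume "g2 < g1"
      then have "Suc g2 \<le> g1" by simp
      then have "Suc g2 * m \<le> g1 * m" by (rule mult_le_mono1)
      then show False using l w by simp
    qed (use l in simp)
  qed
next
  assume w: "w1 < m" "w2 < m" and h: "g1 < g2 \<or> g1 = g2 \<and> w1 < w2"
  show "g1 * m + w1 < g2 * m + w2"
  using h proof
    assume "g1 < g2"
    then have "Suc g1 \<le> g2" by simp
    then have "Suc g1 * m \<le> g2 * m" by (rule mult_le_mono1)
    then show ?thesis using w by simp
  qed simp
qed

lemma lex_eq: "w1 < (m::nat) \<Longrightarrow> w2 < m \<Longrightarrow> (g1 * m + w1 = g2 * m + w2) \<longleftrightarrow> (g1 = g2 \<and> w1 = w2)"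
proof -
  assume w: "w1 < m" "w2 < m"
  show ?thesis
  proof
    assume eq: "g1 * m + w1 = g2 * m + w2"
    then have "\<not> (g1 * m + w1 < g2 * m + w2)" "\<not> (g2 * m + w2 < g1 * m + w1)" by simp_all
    then show "g1 = g2 \<and> w1 = w2" using lex_lt[OF w] lex_lt[OF w(2) w(1)] by auto
  qed simp
qed

lemma posn_lt: "x \<in> VA \<Longrightarrow> y \<in> VA \<Longrightarrow> posn x < posn y \<longleftrightarrow>
   (fst (key x) < fst (key y) \<or> fst (key x) = fst (key y) \<and> snd (key x) < snd (key y))"
  unfolding posn_def by (rule lex_lt[OF key_w key_w])

lemma key_inj: "inj_on key VA"
proof (rule inj_onI)
  fix x y assume x: "x \<in> VA" and y: "y \<in> VA" and k: "key x = key y"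
  show "x = y"
  proof (cases x)
    case (Cy j) then show ?thesis using x y k d1 by (cases y) (auto simp: VA_iff key_def split: if_splits)
  next
    case (Sp \<sigma> j t) then show ?thesis using x y k d1 by (cases y) (auto simp: VA_iff key_def split: if_splits)
  next
    case (Apx \<sigma>) then show ?thesis using x y k d1 by (cases y) (auto simp: VA_iff key_def split: if_splits)
  next
    case (Pd i) then show ?thesis using x y k d1 by (cases y) (auto simp: VA_iff key_def split: if_splits)
  qed
qed

lemma posn_inj: "inj_on posn VA"
proof (rule inj_onI)
  fix x y assume x: "x \<in> VA" and y: "y \<in> VA" and p: "posn x = posn y"
  then have "key x = key y" unfolding posn_def using lex_eq[OF key_w[OF x] key_w[OF y]] by (simp add: prod_eq_iff)
  then show "x = y" using inj_onD[OF key_inj _ x y] by blast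
qed

definition LA :: "vt set set" where
  "LA = {{Apx True, sv True j 1} | j. 1 \<le> j \<and> j < N} \<union> {{Apx True, sv True 0 1}}
     \<union> {{sv False j 1, Apx False} | j. 1 \<le> j \<and> j < N \<and> 2 \<le> d} \<union> {{Cy (N - 1), Cy 0}}"
definition LB :: "vt set set" where
  "LB = {{Cy j, Cy (Suc j)} | j. 1 \<le> j \<and> Suc j < N} \<union> {{Cy 0, Cy 1}}
     \<union> {{Cy j, sv False j (d - 1)} | j. 1 \<le> j \<and> j < N}"
definition short :: "vt \<times> vt \<Rightarrow> bool" where
  "short p \<longleftrightarrow> posn (snd p) = Suc (posn (fst p)) \<or> posn (fst p) = Suc (posn (snd p))"

lemma shortI1: "key b = (fst (key a), Suc (snd (key a))) \<Longrightarrow> short (a, b)"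
  by (simp add: short_def posn_def)
lemma shortI2: "key a = (fst (key b), Suc (snd (key b))) \<Longrightarrow> short (a, b)"
  by (simp add: short_def posn_def)

lemma key_svT: "j \<noteq> 0 \<Longrightarrow> 0 < t \<Longrightarrow> t \<le> d \<Longrightarrow> key (sv True j t) = (j, t)"
  unfolding sv_def key_def by auto
lemma key_svT0: "0 < t \<Longrightarrow> t \<le> d \<Longrightarrow> key (sv True 0 t) = (2 * N - 1, 2 * d - t)"
  unfolding sv_def key_def by auto
lemma key_svF: "j \<noteq> 0 \<Longrightarrow> 0 < t \<Longrightarrow> t < d \<Longrightarrow> key (sv False j t) = (2 * N - 1 - j, d - t)"
  unfolding sv_def key_def by auto
lemma key_svF0: "t \<le> d \<Longrightarrow> key (sv False 0 t) = (2 * N - 1, t)"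
  unfolding sv_def key_def by auto
lemma key_pv: "k \<le> P \<Longrightarrow> key (pv k) = (0, P - k)"
  unfolding pv_def key_def by auto

lemma EA_class: "p \<in> EA \<Longrightarrow> short p \<or> {fst p, snd p} \<in> LA \<or> {fst p, snd p} \<in> LB"
proof -
  assume "p \<in> EA"
  then have "p \<in> Q1 \<union> Q2 \<or> (\<exists>\<sigma> j t. j < N \<and> t < d \<and> p = (sv \<sigma> j t, sv \<sigma> j (Suc t))) \<or> (\<exists>i. i < P \<and> p = (pv (Suc i), pv i))"
  proof (cases rule: EA_cases)
    case (Q1 j) then show ?thesis unfolding Q1_def by blast
  next
    case (Q2 j) then show ?thesis unfolding Q2_def by blast
  next
    case (S \<sigma> j t) then show ?thesis by blast
  next
    case (Pd i) then show ?thesis by blast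
  qed
  moreover have "p \<in> Q1 \<union> Q2 \<Longrightarrow> ?thesis"
  proof -
    assume "p \<in> Q1 \<union> Q2"
    then have "\<exists>j. j < N \<and> p = (cv j, cv (Suc j))" unfolding Q1_def Q2_def
    proof (elim UnE CollectE exE conjE)
      fix j assume "p = (cv j, cv (Suc j))" "j < d"
      then show ?thesis using d1 by (intro exI[of _ j]) simp
    next
      fix j assume "p = (cv j, cv (Suc j))" "d \<le> j" "j < N"
      then show ?thesis by blast
    qed
    then obtain j where j: "j < N" "p = (cv j, cv (Suc j))" by blast
    consider "j = 0" | "1 \<le> j" "Suc j < N" | "Suc j = N" using j by linarith
    then show ?thesis
    proof cases
      case 1
      then have "p = (Cy 0, Cy 1)" using j N3 by (simp add: cv_def)
      moreover have "{Cy 0, Cy 1} \<in> LB" unfolding LB_def by blast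
      ultimately show ?thesis by simp
    next
      case 2
      then have "p = (Cy j, Cy (Suc j))" using j by (simp add: cv_def)
      moreover have "{Cy j, Cy (Suc j)} \<in> LB" unfolding LB_def using 2 by blast
      ultimately show ?thesis by simp
    next
      case 3
      then have "p = (Cy (N - 1), Cy 0)" using j unfolding cv_def by auto
      moreover have "{Cy (N - 1), Cy 0} \<in> LA" unfolding LA_def by blast
      ultimately show ?thesis by simp
    qed
  qed
  moreover have "?thesis" if hj: "j < N" and ht: "t < d" and hp: "p = (sv \<sigma> j t, sv \<sigma> j (Suc t))" for \<sigma> j t
  proof (cases \<sigma>)
    case True
    show ?thesis
    proof (cases "t = 0")
      case True
      have pp: "p = (Apx True, sv True j 1)" using hp \<open>\<sigma>\<close> True by (simp add: sv_def)
      have "{Apx True, sv True j 1} \<in> LA"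
      proof (cases "j = 0")
        case True then show ?thesis unfolding LA_def by blast
      next
        case False then have "1 \<le> j" by simp
        then show ?thesis unfolding LA_def using hj by blast
      qed
      then show ?thesis using pp by simp
    next
      case t0: False
      have "short (sv True j t, sv True j (Suc t))"
      proof (cases "j = 0")
        case True
        show ?thesis
          by (rule shortI2) (use t0 ht True in \<open>simp add: key_svT0\<close>)
      next
        case False
        show ?thesis
          by (rule shortI1) (use t0 ht False in \<open>simp add: key_svT\<close>)
      qed
      then show ?thesis using hp \<open>\<sigma>\<close> by simp
    qed
  next
    case False
    show ?thesis
    proof (cases "j = 0")
      case True
      have "short (sv False 0 t, sv False 0 (Suc t))"
        by (rule shortI1) (use ht in \<open>simp add: key_svF0\<close>)
      then show ?thesis using hp \<open>\<not>\<sigma>\<close> True by simp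
    next
      case j0: False
      consider "t = 0" "2 \<le> d" | "t = 0" "d = 1" | "1 \<le> t" "Suc t < d" | "1 \<le> t" "Suc t = d"
        using ht d1 by linarith
      then show ?thesis
      proof cases
        case 1
        have e0: "sv False j 0 = Apx False" by (simp add: sv_def)
        have pp: "p = (Apx False, sv False j 1)" using hp \<open>\<not>\<sigma>\<close> 1(1) e0 by simp
        have "{sv False j 1, Apx False} \<in> LA" unfolding LA_def using hj j0 1(2) by auto
        then show ?thesis using pp by (simp add: insert_commute)
      next
        case 2
        have e0: "sv False j 0 = Apx False" by (simp add: sv_def)
        have e1: "sv False j (Suc 0) = Cy j" unfolding sv_def using 2(2) by simp
        have pp: "p = (Apx False, Cy j)" using hp \<open>\<not>\<sigma>\<close> 2(1) e0 e1 by simp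
        have sv0: "sv False j (d - 1) = Apx False" unfolding sv_def using 2(2) by simp
        have "{Cy j, sv False j (d - 1)} \<in> LB" unfolding LB_def using hj j0 by auto
        then show ?thesis using pp sv0 by (simp add: insert_commute)
      next
        case 3
        have "short (sv False j t, sv False j (Suc t))"
          by (rule shortI2) (use 3 j0 in \<open>simp add: key_svF\<close>)
        then show ?thesis using hp \<open>\<not>\<sigma>\<close> by simp
      next
        case 4
        have e1: "sv False j t = Sp False j (d - 1)" unfolding sv_def using 4 by auto
        have e2: "sv False j (Suc t) = Cy j" unfolding sv_def using 4 by auto
        have pp: "p = (Sp False j (d - 1), Cy j)" using hp \<open>\<not>\<sigma>\<close> e1 e2 by simp
        have sv0: "sv False j (d - 1) = Sp False j (d - 1)" unfolding sv_def using 4 by auto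
        have "{Cy j, sv False j (d - 1)} \<in> LB" unfolding LB_def using hj j0 by auto
        then show ?thesis using pp sv0 by (simp add: insert_commute)
      qed
    qed
  qed
  moreover have "?thesis" if hi: "i < P" and hp: "p = (pv (Suc i), pv i)" for i
  proof -
    have "short (pv (Suc i), pv i)"
      by (rule shortI1) (use hi in \<open>simp add: key_pv\<close>)
    then show ?thesis using hp by simp
  qed
  ultimately show ?thesis by blast
qed


definition cr :: "vt set \<Rightarrow> vt set \<Rightarrow> bool" where
  "cr S S' \<longleftrightarrow> (\<exists>a b a' b'. S = {a,b} \<and> S' = {a',b'} \<and> posn a < posn a' \<and> posn a' < posn b \<and> posn b < posn b')"

lemma short_nocr: "short (x, y) \<Longrightarrow> \<not> cr {x,y} S' \<and> \<not> cr S' {x,y}"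
proof -
  assume sh: "short (x, y)"
  have n1: "\<not> cr {x,y} S'"
  proof
    assume "cr {x,y} S'"
    then obtain a b a' b' where ab: "{x,y} = {a,b}" and l: "posn a < posn a'" "posn a' < posn b" unfolding cr_def by blast
    from ab have "(a = x \<and> b = y) \<or> (a = y \<and> b = x)" using l by (auto simp: doubleton_eq_iff)
    then show False using sh l unfolding short_def by auto
  qed
  have n2: "\<not> cr S' {x,y}"
  proof
    assume "cr S' {x,y}"
    then obtain a b a' b' where ab: "{x,y} = {a',b'}" and l: "posn a' < posn b" "posn b < posn b'" unfolding cr_def by blast
    from ab have "(a' = x \<and> b' = y) \<or> (a' = y \<and> b' = x)" using l by (auto simp: doubleton_eq_iff)
    then show False using sh l unfolding short_def by auto
  qed
  from n1 n2 show ?thesis by blast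
qed

definition lexlt :: "nat \<times> nat \<Rightarrow> nat \<times> nat \<Rightarrow> bool" where
  "lexlt k k' \<longleftrightarrow> fst k < fst k' \<or> fst k = fst k' \<and> snd k < snd k'"

definition ilv :: "nat \<times> nat \<Rightarrow> nat \<times> nat \<Rightarrow> nat \<times> nat \<Rightarrow> nat \<times> nat \<Rightarrow> bool" where
  "ilv k1 k2 k1' k2' \<longleftrightarrow> (lexlt k1 k1' \<and> lexlt k1' k2 \<and> lexlt k2 k2') \<or> (lexlt k2 k1' \<and> lexlt k1' k1 \<and> lexlt k1 k2')
     \<or> (lexlt k1 k2' \<and> lexlt k2' k2 \<and> lexlt k2 k1') \<or> (lexlt k2 k2' \<and> lexlt k2' k1 \<and> lexlt k1 k1')"

lemma cr_keys: "x \<in> VA \<Longrightarrow> y \<in> VA \<Longrightarrow> x' \<in> VA \<Longrightarrow> y' \<in> VA \<Longrightarrow> cr {x,y} {x',y'} \<Longrightarrow> ilv (key x) (key y) (key x') (key y')"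
proof -
  assume v: "x \<in> VA" "y \<in> VA" "x' \<in> VA" "y' \<in> VA" and "cr {x,y} {x',y'}"
  then obtain a b a' b' where ab: "{x,y} = {a,b}" "{x',y'} = {a',b'}" and l: "posn a < posn a'" "posn a' < posn b" "posn b < posn b'"
    unfolding cr_def by blast
  have L: "\<And>p q. p \<in> VA \<Longrightarrow> q \<in> VA \<Longrightarrow> posn p < posn q \<Longrightarrow> lexlt (key p) (key q)"
    unfolding lexlt_def using posn_lt by blast
  from ab(1) have o1: "(a = x \<and> b = y) \<or> (a = y \<and> b = x)" using l by (auto simp: doubleton_eq_iff)
  from ab(2) have o2: "(a' = x' \<and> b' = y') \<or> (a' = y' \<and> b' = x')" using l by (auto simp: doubleton_eq_iff)
  from o1 o2 show ?thesis unfolding ilv_def using L[OF _ _ l(1)] L[OF _ _ l(2)] L[OF _ _ l(3)] v by auto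
qed

definition KA :: "((nat \<times> nat) \<times> (nat \<times> nat)) set" where
  "KA = {((0,P),(j,1)) | j. 1 \<le> j \<and> j < N} \<union> {((0,P),(2*N-1,2*d-1))}
      \<union> {((2*N-1-j,d-1),(2*N-1,0)) | j. 1 \<le> j \<and> j < N \<and> 2 \<le> d} \<union> {((N-1,d),(2*N-1,d))}"
definition KB :: "((nat \<times> nat) \<times> (nat \<times> nat)) set" where
  "KB = {((j,d),(Suc j,d)) | j. 1 \<le> j \<and> Suc j < N} \<union> {((2*N-1,d),(1,d))}
      \<union> {((j,d), (if d = 1 then (2*N-1,0) else (2*N-1-j,1))) | j. 1 \<le> j \<and> j < N}"

lemma KA_nc: "p \<in> KA \<Longrightarrow> q \<in> KA \<Longrightarrow> \<not> ilv (fst p) (snd p) (fst q) (snd q)"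
  using d1 unfolding KA_def
  apply (elim UnE CollectE exE conjE insertE emptyE)
  apply (simp_all add: ilv_def lexlt_def)
  apply auto
  done

lemma KB_nc: "p \<in> KB \<Longrightarrow> q \<in> KB \<Longrightarrow> \<not> ilv (fst p) (snd p) (fst q) (snd q)"
  using d1 unfolding KB_def
  apply (elim UnE CollectE exE conjE insertE emptyE)
  apply (simp_all add: ilv_def lexlt_def)
  apply (auto split: if_splits)
  done

lemma LA_keys: "S \<in> LA \<Longrightarrow> \<exists>x y. x \<in> VA \<and> y \<in> VA \<and> S = {x,y} \<and> (key x, key y) \<in> KA"
proof -
  assume "S \<in> LA"
  then consider (a1) j where "1 \<le> j" "j < N" "S = {Apx True, sv True j 1}" | (a2) "S = {Apx True, sv True 0 1}"
    | (a3) j where "1 \<le> j" "j < N" "2 \<le> d" "S = {sv False j 1, Apx False}" | (a4) "S = {Cy (N - 1), Cy 0}"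
    unfolding LA_def by blast
  then show ?thesis
  proof cases
    case a1
    have "key (sv True j 1) = (j, 1)" using a1 d1 by (simp add: key_svT)
    moreover have "key (Apx True) = (0, P)" by (simp add: key_def)
    moreover have "sv True j 1 \<in> VA" by (rule sv_in) (use a1 d1 in auto)
    moreover have "Apx True \<in> VA" by (simp add: VA_iff)
    ultimately show ?thesis using a1 unfolding KA_def by blast
  next
    case a2
    have "key (sv True 0 1) = (2*N-1, 2*d-1)" using d1 by (simp add: key_svT0)
    moreover have "key (Apx True) = (0, P)" by (simp add: key_def)
    moreover have "sv True 0 1 \<in> VA" by (rule sv_in) (use d1 in auto)
    moreover have "Apx True \<in> VA" by (simp add: VA_iff)
    ultimately show ?thesis using a2 unfolding KA_def by blast
  next
    case a3
    have "key (sv False j 1) = (2*N-1-j, d-1)" using a3 by (simp add: key_svF)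
    moreover have "key (Apx False) = (2*N-1, 0)" by (simp add: key_def)
    moreover have "sv False j 1 \<in> VA" by (rule sv_in) (use a3 in auto)
    moreover have "Apx False \<in> VA" by (simp add: VA_iff)
    ultimately show ?thesis using a3 unfolding KA_def by blast
  next
    case a4
    have "key (Cy (N - 1)) = (N - 1, d)" "key (Cy 0) = (2*N-1, d)" using d1 by (auto simp: key_def)
    moreover have "Cy (N - 1) \<in> VA" "Cy 0 \<in> VA" using d1 by (auto simp: VA_iff)
    ultimately show ?thesis using a4 unfolding KA_def by blast
  qed
qed

lemma LB_keys: "S \<in> LB \<Longrightarrow> \<exists>x y. x \<in> VA \<and> y \<in> VA \<and> S = {x,y} \<and> (key x, key y) \<in> KB"
proof -
  assume "S \<in> LB"
  then consider (b1) j where "1 \<le> j" "Suc j < N" "S = {Cy j, Cy (Suc j)}" | (b2) "S = {Cy 0, Cy 1}"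
    | (b3) j where "1 \<le> j" "j < N" "S = {Cy j, sv False j (d - 1)}"
    unfolding LB_def by blast
  then show ?thesis
  proof cases
    case b1
    have "key (Cy j) = (j, d)" "key (Cy (Suc j)) = (Suc j, d)" using b1 by (auto simp: key_def)
    moreover have "Cy j \<in> VA" "Cy (Suc j) \<in> VA" using b1 by (auto simp: VA_iff)
    ultimately show ?thesis using b1 unfolding KB_def by blast
  next
    case b2
    have "key (Cy 0) = (2*N-1, d)" "key (Cy 1) = (1, d)" by (auto simp: key_def)
    moreover have "Cy 0 \<in> VA" "Cy 1 \<in> VA" using d1 by (auto simp: VA_iff)
    ultimately show ?thesis using b2 unfolding KB_def by blast
  next
    case b3
    have k1: "key (Cy j) = (j, d)" using b3 by (auto simp: key_def)
    have k2: "key (sv False j (d - 1)) = (if d = 1 then (2*N-1,0) else (2*N-1-j,1))"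
    proof (cases "d = 1")
      case True
      then have e: "sv False j (d - 1) = Apx False" unfolding sv_def by simp
      have "key (sv False j (d - 1)) = key (Apx False)" unfolding e ..
      also have "\<dots> = (2*N-1, 0)" by (simp add: key_def)
      also have "\<dots> = (if d = 1 then (2*N-1,0) else (2*N-1-j,1))" using True by simp
      finally show ?thesis .
    next
      case False
      then have "key (sv False j (d - 1)) = (2*N-1-j, d - (d - 1))" using b3 d1 by (intro key_svF) auto
      then show ?thesis using False d1 by simp
    qed
    have "Cy j \<in> VA" using b3 by (simp add: VA_iff)
    moreover have "sv False j (d - 1) \<in> VA" by (rule sv_in) (use b3 in auto)
    ultimately have "Cy j \<in> VA" "sv False j (d - 1) \<in> VA" by blast+
    then show ?thesis using b3 k1 k2 unfolding KB_def by blast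
  qed
qed

lemma crA: "S \<in> LA \<Longrightarrow> S' \<in> LA \<Longrightarrow> \<not> cr S S'"
proof
  assume "S \<in> LA" "S' \<in> LA" "cr S S'"
  from LA_keys[OF \<open>S \<in> LA\<close>] obtain x y where xy: "x \<in> VA" "y \<in> VA" "S = {x,y}" "(key x, key y) \<in> KA" by blast
  from LA_keys[OF \<open>S' \<in> LA\<close>] obtain x' y' where xy': "x' \<in> VA" "y' \<in> VA" "S' = {x',y'}" "(key x', key y') \<in> KA" by blast
  have "ilv (key x) (key y) (key x') (key y')" using cr_keys[OF xy(1,2) xy'(1,2)] \<open>cr S S'\<close> xy(3) xy'(3) by simp
  then show False using KA_nc[OF xy(4) xy'(4)] by simp
qed

lemma crB: "S \<in> LB \<Longrightarrow> S' \<in> LB \<Longrightarrow> \<not> cr S S'"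
proof
  assume "S \<in> LB" "S' \<in> LB" "cr S S'"
  from LB_keys[OF \<open>S \<in> LB\<close>] obtain x y where xy: "x \<in> VA" "y \<in> VA" "S = {x,y}" "(key x, key y) \<in> KB" by blast
  from LB_keys[OF \<open>S' \<in> LB\<close>] obtain x' y' where xy': "x' \<in> VA" "y' \<in> VA" "S' = {x',y'}" "(key x', key y') \<in> KB" by blast
  have "ilv (key x) (key y) (key x') (key y')" using cr_keys[OF xy(1,2) xy'(1,2)] \<open>cr S S'\<close> xy(3) xy'(3) by simp
  then show False using KB_nc[OF xy(4) xy'(4)] by simp
qed

lemma from_ed: "from_nat ` ed p = {fst p, snd p}"
  unfolding ed_def by simp

lemma planar_VE: "planar V E"
proof (rule book_planar[OF graph_VE, where pos = "\<lambda>n. real (posn (from_nat n))" and pg = "\<lambda>e. from_nat ` e \<in> LB"])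
  show "inj_on (\<lambda>n. real (posn (from_nat n))) V"
  proof (rule inj_onI)
    fix x y assume x: "x \<in> V" and y: "y \<in> V" and eq: "real (posn (from_nat x)) = real (posn (from_nat y))"
    from x obtain a where a: "a \<in> VA" "x = to_nat a" unfolding V_def by auto
    from y obtain b where b: "b \<in> VA" "y = to_nat b" unfolding V_def by auto
    from eq a b have "posn a = posn b" by simp
    then have "a = b" using inj_onD[OF posn_inj _ a(1) b(1)] by blast
    then show "x = y" using a b by simp
  qed
next
  fix e e' assume eE: "e \<in> E" and e'E: "e' \<in> E" and ne: "e \<noteq> e'" and pg: "(from_nat ` e \<in> LB) = (from_nat ` e' \<in> LB)"
  from eE obtain p where p: "p \<in> EA" "e = ed p" unfolding E_def by auto
  from e'E obtain q where q: "q \<in> EA" "e' = ed q" unfolding E_def by auto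
  show "\<not> crosses (\<lambda>n. real (posn (from_nat n))) e e'"
  proof
    assume "crosses (\<lambda>n. real (posn (from_nat n))) e e'"
    then obtain x y x' y' where c: "e = {x,y}" "e' = {x',y'}" "posn (from_nat x) < posn (from_nat x')"
      "posn (from_nat x') < posn (from_nat y)" "posn (from_nat y) < posn (from_nat y')"
      unfolding crosses_def by auto
    have s1: "{fst p, snd p} = {from_nat x, from_nat y}" using c(1) p(2) from_ed[of p] by simp
    have s2: "{fst q, snd q} = {from_nat x', from_nat y'}" using c(2) q(2) from_ed[of q] by simp
    have CR: "cr {fst p, snd p} {fst q, snd q}" unfolding cr_def s1 s2 using c(3-5) by blast
    have pg2: "({fst p, snd p} \<in> LB) = ({fst q, snd q} \<in> LB)" using pg p(2) q(2) from_ed by simp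
    have sp: "\<not> short p"
    proof
      assume "short p" then have "short (fst p, snd p)" by simp
      from short_nocr[OF this] CR show False by blast
    qed
    have sq: "\<not> short q"
    proof
      assume "short q" then have "short (fst q, snd q)" by simp
      from short_nocr[OF this] CR show False by blast
    qed
    have cp: "{fst p, snd p} \<in> LA \<or> {fst p, snd p} \<in> LB" using EA_class[OF p(1)] sp by blast
    have cq: "{fst q, snd q} \<in> LA \<or> {fst q, snd q} \<in> LB" using EA_class[OF q(1)] sq by blast
    show False
    proof (cases "{fst p, snd p} \<in> LB")
      case True
      then have "{fst q, snd q} \<in> LB" using pg2 by simp
      then show False using crB[OF True] CR by blast
    next
      case False
      then have "{fst q, snd q} \<notin> LB" using pg2 by simp
      then show False using crA False cp cq CR by blast
    qed
  qed
qed
end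


theorem corollary1:
  fixes n d :: nat
  assumes "1 \<le> d" and "real d \<le> sqrt (real n) / 3"
  shows "\<exists>(V :: nat set) E u v rt.
           graph V E \<and> connected_graph V E \<and> planar V E \<and> card V = n \<and>
           u \<in> V \<and> v \<in> V \<and> gdist E u v = d \<and>
           valid_root_rule V E rt \<and>
           (\<forall>R::nat. R > 2 * d \<longrightarrow>
              kpr_sep_prob V E R rt u v \<le> 8 * (real (gdist E u v) / real R) ^ 4)"
proof -
  have "real (3 * d) \<le> sqrt (real n)" using assms(2) by simp
  then have "real (3 * d) ^ 2 \<le> sqrt (real n) ^ 2" by (rule power_mono) simp
  then have "real ((3 * d) ^ 2) \<le> real n" by simp
  then have n9: "(3 * d) ^ 2 \<le> n" by linarith
  have small: "3 * d + 2 * (3 * d * (d - 1)) + 2 \<le> (3 * d) ^ 2"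
  proof -
    obtain k where k: "d = Suc k" using assms(1) by (cases d) auto
    show ?thesis unfolding k by (simp add: algebra_simps power2_eq_square)
  qed
  define P where "P = n - (3 * d + 2 * (3 * d * (d - 1)) + 2)"
  interpret G: KG d P using assms(1) by unfold_locales
  have cardV: "card G.V = n" using G.card_V small n9 unfolding P_def by simp
  have uV: "to_nat (Cy 0) \<in> G.V" by (rule G.u0_V)
  have vV: "to_nat (Cy d) \<in> G.V"
  proof -
    have "Cy d \<in> G.VA" using assms(1) by (simp add: G.VA_iff)
    then show ?thesis unfolding G.V_def by simp
  qed
  have sep: "\<forall>R::nat. R > 2 * d \<longrightarrow>
      kpr_sep_prob G.V G.E R G.rt (to_nat (Cy 0)) (to_nat (Cy d))
        \<le> 8 * (real (gdist G.E (to_nat (Cy 0)) (to_nat (Cy d))) / real R) ^ 4"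
    using G.sep_bound G.gdist_uv by simp
  show ?thesis
    using G.graph_VE G.connected_VE G.planar_VE cardV uV vV G.gdist_uv G.valid_rt sep by blast
qed

end
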